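(* Let $\Omega\subset\mathbb R^d$ be a nonempty bounded open set and $\bar x_1,\bar x_2,\dots\in\Omega$ regularly distributed. Then for every $\tau>0$, $s\in\mathbb N$, $h\in H^{-s}(\Omega;\mathbb R^n)$ and $p\in[1,\infty)$, $\lim_{N\to\infty}W_p(\mathbf M_{N,\tau}(h),\gamma_{R_\tau h})=0$, where $\gamma_{R_\tau h}=(\mathrm{id},R_\tau h)_\#\bar\lambda_\Omega$.
   Context: $H^{-s}(\Omega)$ is the dual of $H^s_0(\Omega)$. Regularly distributed: $\frac1N\sum_{j=1}^N\varphi(\bar x_j)\to\frac1{\mathrm{vol}(\Omega)}\int_\Omega\varphi$ for all $\varphi\in C(\overline\Omega)$. $\mathbf M_N(g)=\frac1N\sum_{j=1}^N\delta_{(\bar x_j,g(\bar x_j))}$ and $\mathbf M_{N,\tau}(h)=\mathbf M_N(R_\tau h)$, where $R_\tau h=\rho_\tau*\mathcal E_0(\psi_\tau h)$, $\rho_\tau$ a mollifier supported in $B(0,\tau)$ with integral $1$, $\psi_\tau=\rho_\tau*\mathbf 1_{\Omega_\tau}$, $\Omega_\tau=\{x\in\Omega:\mathrm{dist}(x,\partial\Omega)>4\tau\}$, $\mathcal E_0$ extension by zero. $\bar\lambda_\Omega$ is normalized Lebesgue measure; $W_p$ the $p$-Wasserstein distance. *)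

theory Defs
  imports "HOL-Probability.Probability"
begin

text \<open>Iterated partial derivatives along a list of coordinate directions
  (the head of the list is the last derivative applied).\<close>
fun partials :: "'d::finite list \<Rightarrow> (real^'d \<Rightarrow> real) \<Rightarrow> (real^'d \<Rightarrow> real)" where
  "partials [] f = f"
| "partials (i # ks) f = (\<lambda>x. frechet_derivative (partials ks f) (at x) (axis i 1))"

definition smooth :: "(real^'d::finite \<Rightarrow> real) \<Rightarrow> bool" where
  "smooth f \<longleftrightarrow> (\<forall>ks x. partials ks f differentiable (at x))"

definition test_fun :: "(real^'d::finite) set \<Rightarrow> (real^'d \<Rightarrow> real) \<Rightarrow> bool" where
  "test_fun \<Omega> f \<longleftrightarrow> smooth f \<and> compact (closure {x. f x \<noteq> 0}) \<and> closure {x. f x \<noteq> 0} \<subseteq> \<Omega>"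

text \<open>H^s norm: square root of the sum over all derivatives of order at most s of the
  squared L^2 norms (an equivalent version of the usual multi-index norm).\<close>
definition Hs_norm :: "nat \<Rightarrow> (real^'d::finite \<Rightarrow> real) \<Rightarrow> real" where
  "Hs_norm s f = sqrt (\<Sum>ks\<in>{ks::'d list. length ks \<le> s}. \<integral>x. (partials ks f x)\<^sup>2 \<partial>lborel)"

text \<open>h is an element of H^{-s}(Omega; R^n) = (H^s_0(Omega))^n dual: a linear functional
  on C_c^infinity(Omega) (dense in H^s_0) that is bounded in the H^s norm.\<close>
definition H_minus :: "nat \<Rightarrow> (real^'d::finite) set \<Rightarrow> ((real^'d \<Rightarrow> real) \<Rightarrow> real^'n::finite) \<Rightarrow> bool" where
  "H_minus s \<Omega> h \<longleftrightarrow>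
     (\<forall>f g a b. test_fun \<Omega> f \<longrightarrow> test_fun \<Omega> g \<longrightarrow>
        h (\<lambda>x. a * f x + b * g x) = a *\<^sub>R h f + b *\<^sub>R h g) \<and>
     (\<exists>C. \<forall>f. test_fun \<Omega> f \<longrightarrow> norm (h f) \<le> C * Hs_norm s f)"

definition Omega_tau :: "(real^'d::finite) set \<Rightarrow> real \<Rightarrow> (real^'d) set" where
  "Omega_tau \<Omega> \<tau> = {x\<in>\<Omega>. infdist x (frontier \<Omega>) > 4 * \<tau>}"

definition psi_tau :: "(real^'d::finite) set \<Rightarrow> real \<Rightarrow> (real^'d \<Rightarrow> real) \<Rightarrow> real^'d \<Rightarrow> real" where
  "psi_tau \<Omega> \<tau> \<rho> y = (LINT z:Omega_tau \<Omega> \<tau>|lborel. \<rho> (y - z))"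

text \<open>R_tau h = rho_tau * E_0(psi_tau h); for a distribution T, (rho * T)(x) = T(rho(x - .)),
  and E_0(psi_tau h)(phi) = h(psi_tau phi).\<close>
definition R_tau :: "(real^'d::finite) set \<Rightarrow> real \<Rightarrow> (real^'d \<Rightarrow> real)
     \<Rightarrow> ((real^'d \<Rightarrow> real) \<Rightarrow> real^'n::finite) \<Rightarrow> real^'d \<Rightarrow> real^'n" where
  "R_tau \<Omega> \<tau> \<rho> h x = h (\<lambda>y. psi_tau \<Omega> \<tau> \<rho> y * \<rho> (x - y))"

definition mollifier :: "real \<Rightarrow> (real^'d::finite \<Rightarrow> real) \<Rightarrow> bool" where
  "mollifier \<tau> \<rho> \<longleftrightarrow> smooth \<rho> \<and> (\<forall>x. 0 \<le> \<rho> x) \<and> {x. \<rho> x \<noteq> 0} \<subseteq> ball 0 \<tau>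
      \<and> integral\<^sup>L lborel \<rho> = 1"

definition regularly_distributed :: "(real^'d::finite) set \<Rightarrow> (nat \<Rightarrow> real^'d) \<Rightarrow> bool" where
  "regularly_distributed \<Omega> xs \<longleftrightarrow> (\<forall>j\<ge>1. xs j \<in> \<Omega>) \<and>
     (\<forall>\<phi>::real^'d \<Rightarrow> real. continuous_on (closure \<Omega>) \<phi> \<longrightarrow>
        (\<lambda>N. (\<Sum>j=1..N. \<phi> (xs j)) / real N) \<longlonglongrightarrow> (LINT x:\<Omega>|lborel. \<phi> x) / measure lborel \<Omega>)"

definition empirical :: "nat \<Rightarrow> (nat \<Rightarrow> real^'d::finite) \<Rightarrow> (real^'d \<Rightarrow> real^'n::finite)
     \<Rightarrow> ((real^'d) \<times> (real^'n)) measure" where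
  "empirical N xs g = distr (uniform_measure (count_space UNIV) {1..N}) borel (\<lambda>j. (xs j, g (xs j)))"

definition graph_measure :: "(real^'d::finite) set \<Rightarrow> (real^'d \<Rightarrow> real^'n::finite)
     \<Rightarrow> ((real^'d) \<times> (real^'n)) measure" where
  "graph_measure \<Omega> g = distr (uniform_measure lborel \<Omega>) borel (\<lambda>x. (x, g x))"

definition couplings :: "'a::metric_space measure \<Rightarrow> 'a measure \<Rightarrow> ('a \<times> 'a) measure set" where
  "couplings \<mu> \<nu> = {\<pi>. sets \<pi> = sets (borel \<Otimes>\<^sub>M borel) \<and>
       distr \<pi> borel fst = \<mu> \<and> distr \<pi> borel snd = \<nu>}"

definition transport_cost :: "real \<Rightarrow> 'a::metric_space measure \<Rightarrow> 'a measure \<Rightarrow> ennreal" where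
  "transport_cost p \<mu> \<nu> = (INF \<pi>\<in>couplings \<mu> \<nu>. \<integral>\<^sup>+ z. ennreal (dist (fst z) (snd z) powr p) \<partial>\<pi>)"

definition wasserstein :: "real \<Rightarrow> 'a::metric_space measure \<Rightarrow> 'a measure \<Rightarrow> ennreal" where
  "wasserstein p \<mu> \<nu> = (if transport_cost p \<mu> \<nu> = \<top> then \<top>
      else ennreal (enn2real (transport_cost p \<mu> \<nu>) powr (1 / p)))"

end

theory Submission
  imports Defs
begin


lemma smooth_diff: "smooth f \<Longrightarrow> partials ks f differentiable (at x)"
  by (simp add: smooth_def)

lemma smooth_hasd: "smooth f \<Longrightarrow> (partials ks f has_derivative frechet_derivative (partials ks f) (at x)) (at x)"
  using smooth_diff frechet_derivative_works by blast

lemma smooth_cont: "smooth f \<Longrightarrow> continuous_on UNIV (partials ks f)"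
  by (meson continuous_at_imp_continuous_on differentiable_imp_continuous_within smooth_diff)

lemma axis_expand: "(v::real^'d) = (\<Sum>i\<in>UNIV. v$i *\<^sub>R axis i 1)"
  by (metis (no_types, lifting) basis_expansion sum.cong vector_scaleR_component scalar_mult_eq_scaleR)

lemma frechet_axis:
  assumes "smooth f"
  shows "frechet_derivative (partials ks f) (at x) v = (\<Sum>i\<in>UNIV. v$i * partials (i#ks) f x)"
proof -
  have lin: "linear (frechet_derivative (partials ks f) (at x))"
    using smooth_hasd[OF assms] has_derivative_linear by blast
  have "frechet_derivative (partials ks f) (at x) v = frechet_derivative (partials ks f) (at x) (\<Sum>i\<in>UNIV. v$i *\<^sub>R axis i 1)"
    using axis_expand[of v] by simp
  also have "\<dots> = (\<Sum>i\<in>UNIV. v$i * frechet_derivative (partials ks f) (at x) (axis i 1))"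
    using lin by (simp add: linear_sum linear_scale)
  finally show ?thesis by simp
qed

lemma partials_Cons_eq:
  "partials ks F = G \<Longrightarrow> (G has_derivative G') (at x) \<Longrightarrow> partials (i#ks) F x = G' (axis i 1)"
  by (simp add: frechet_derivative_at[symmetric])

lemma partials_lincomb:
  assumes "smooth f" "smooth g"
  shows "partials ks (\<lambda>y. a * f y + b * g y) = (\<lambda>y. a * partials ks f y + b * partials ks g y)"
proof (induction ks)
  case Nil then show ?case by simp
next
  case (Cons i ks)
  show ?case
  proof
    fix x
    have "((\<lambda>y. a * partials ks f y + b * partials ks g y) has_derivative
       (\<lambda>v. a * frechet_derivative (partials ks f) (at x) v + b * frechet_derivative (partials ks g) (at x) v)) (at x)"
      using smooth_hasd[OF assms(1)] smooth_hasd[OF assms(2)]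
      by (intro derivative_eq_intros) auto
    from partials_Cons_eq[OF Cons this] show "partials (i # ks) (\<lambda>y. a * f y + b * g y) x =
      a * partials (i # ks) f x + b * partials (i # ks) g x" by simp
  qed
qed

lemma smooth_lincomb:
  assumes "smooth f" "smooth g"
  shows "smooth (\<lambda>y. a * f y + b * g y)"
  unfolding smooth_def partials_lincomb[OF assms]
  using smooth_diff[OF assms(1)] smooth_diff[OF assms(2)]
  by (auto intro!: derivative_intros)

lemma has_derivative_sum_list:
  assumes "\<And>p. p \<in> set L \<Longrightarrow> (F p has_derivative F' p) (at x)"
  shows "((\<lambda>y. \<Sum>p\<leftarrow>L. F p y) has_derivative (\<lambda>v. \<Sum>p\<leftarrow>L. F' p v)) (at x)"
  using assms
proof (induction L)
  case Nil then show ?case by (simp add: has_derivative_const)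
next
  case (Cons a L)
  then show ?case by (auto intro!: has_derivative_add)
qed

fun leib :: "'d list \<Rightarrow> ('d list \<times> 'd list) list" where
  "leib [] = [([],[])]"
| "leib (i#ks) = map (\<lambda>p. (i # fst p, snd p)) (leib ks) @ map (\<lambda>p. (fst p, i # snd p)) (leib ks)"

lemma leib_length: "p \<in> set (leib ks) \<Longrightarrow> length (fst p) + length (snd p) = length ks"
  by (induction ks arbitrary: p) auto

lemma leib_len: "length (leib ks) = 2 ^ length ks"
  by (induction ks) auto

lemma partials_mult:
  assumes "smooth f" "smooth g"
  shows "partials ks (\<lambda>y. f y * g y) = (\<lambda>y. \<Sum>p\<leftarrow>leib ks. partials (fst p) f y * partials (snd p) g y)"
proof (induction ks)
  case Nil then show ?case by simp
next
  case (Cons i ks)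
  show ?case
  proof
    fix x
    have "((\<lambda>y. \<Sum>p\<leftarrow>leib ks. partials (fst p) f y * partials (snd p) g y) has_derivative
       (\<lambda>v. \<Sum>p\<leftarrow>leib ks. partials (fst p) f x * frechet_derivative (partials (snd p) g) (at x) v
             + frechet_derivative (partials (fst p) f) (at x) v * partials (snd p) g x)) (at x)"
      using smooth_hasd[OF assms(1)] smooth_hasd[OF assms(2)]
      by (intro has_derivative_sum_list has_derivative_mult) auto
    from partials_Cons_eq[OF Cons this]
    have "partials (i # ks) (\<lambda>y. f y * g y) x = (\<Sum>p\<leftarrow>leib ks. partials (fst p) f x * partials (i # snd p) g x
             + partials (i # fst p) f x * partials (snd p) g x)" by simp
    also have "\<dots> = (\<Sum>p\<leftarrow>leib (i#ks). partials (fst p) f x * partials (snd p) g x)"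
      by (simp add: sum_list_addf o_def add.commute)
    finally show "partials (i # ks) (\<lambda>y. f y * g y) x = (\<Sum>p\<leftarrow>leib (i#ks). partials (fst p) f x * partials (snd p) g x)" .
  qed
qed

lemma differentiable_sum_list:
  "(\<And>p. p \<in> set L \<Longrightarrow> F p differentiable (at x)) \<Longrightarrow> (\<lambda>y. \<Sum>p\<leftarrow>L. F p y) differentiable (at x)"
  by (induction L) auto

lemma smooth_mult:
  assumes "smooth f" "smooth g"
  shows "smooth (\<lambda>y. f y * g y)"
  unfolding smooth_def partials_mult[OF assms]
  using smooth_diff[OF assms(1)] smooth_diff[OF assms(2)]
  by (auto intro!: differentiable_sum_list differentiable_mult)

lemma partials_refl:
  assumes "smooth f"
  shows "partials ks (\<lambda>y. f (x0 - y)) = (\<lambda>y. (-1) ^ length ks * partials ks f (x0 - y))"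
proof (induction ks)
  case Nil then show ?case by simp
next
  case (Cons i ks)
  show ?case
  proof
    fix x
    have d1: "((\<lambda>y. x0 - y) has_derivative (\<lambda>v. - v)) (at x)"
      by (auto intro!: derivative_eq_intros)
    have "((\<lambda>y. partials ks f (x0 - y)) has_derivative (\<lambda>v. frechet_derivative (partials ks f) (at (x0 - x)) (- v))) (at x)"
      using has_derivative_compose[OF d1 smooth_hasd[OF assms, of ks "x0 - x"]] by (simp add: o_def)
    then have "((\<lambda>y. (-1) ^ length ks * partials ks f (x0 - y)) has_derivative
       (\<lambda>v. (-1) ^ length ks * frechet_derivative (partials ks f) (at (x0 - x)) (- v))) (at x)"
      by (intro derivative_eq_intros) auto
    from partials_Cons_eq[OF Cons this]
    have "partials (i # ks) (\<lambda>y. f (x0 - y)) x = (-1) ^ length ks * frechet_derivative (partials ks f) (at (x0 - x)) (- axis i 1)"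
      by simp
    also have "\<dots> = (-1) ^ length (i#ks) * partials (i#ks) f (x0 - x)"
    proof -
      have lin: "linear (frechet_derivative (partials ks f) (at (x0 - x)))"
        using smooth_hasd[OF assms] has_derivative_linear by blast
      show ?thesis using linear_neg[OF lin] by simp
    qed
    finally show "partials (i # ks) (\<lambda>y. f (x0 - y)) x = (-1) ^ length (i#ks) * partials (i#ks) f (x0 - x)" .
  qed
qed

lemma smooth_refl:
  assumes "smooth f"
  shows "smooth (\<lambda>y. f (x0 - y))"
proof -
  { fix ks x
    have d1: "((\<lambda>y. x0 - y) has_derivative (\<lambda>v. - v)) (at x)"
      by (auto intro!: derivative_eq_intros)
    have "(\<lambda>y. partials ks f (x0 - y)) differentiable (at x)"
      using has_derivative_compose[OF d1 smooth_hasd[OF assms, of ks "x0 - x"]]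
      by (auto simp: o_def differentiable_def)
    then have "(\<lambda>y. (-1) ^ length ks * partials ks f (x0 - y)) differentiable (at x)"
      by (auto intro!: differentiable_mult)
  }
  then show ?thesis unfolding smooth_def partials_refl[OF assms] by blast
qed


lemma partials_zero_open:
  assumes "smooth f" "open U" "\<And>y. y \<in> U \<Longrightarrow> f y = 0" "y \<in> U"
  shows "partials ks f y = 0"
  using assms(4)
proof (induction ks arbitrary: y)
  case Nil then show ?case using assms(3) by simp
next
  case (Cons i ks)
  have "((\<lambda>_. 0) has_derivative (\<lambda>_. 0)) (at y)" by (rule has_derivative_const)
  then have "(partials ks f has_derivative (\<lambda>_. 0)) (at y)"
    using has_derivative_transform_within_open[of "\<lambda>_. 0" "\<lambda>_. 0" y UNIV U "partials ks f"] Cons assms(2)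
    by auto
  then show ?case by (simp add: frechet_derivative_at[symmetric])
qed

lemma cs_bounded:
  fixes f :: "real^'d \<Rightarrow> real"
  assumes "continuous_on UNIV f" "\<And>y. y \<notin> cball 0 R \<Longrightarrow> f y = 0"
  shows "\<exists>B. \<forall>y. \<bar>f y\<bar> \<le> B"
proof -
  have "compact (f ` cball 0 R)"
    using compact_continuous_image[OF continuous_on_subset[OF assms(1)]] by auto
  then obtain B where B: "\<forall>z\<in>f ` cball 0 R. norm z \<le> B"
    using compact_imp_bounded bounded_iff by metis
  show ?thesis
  proof (intro exI[of _ "max B 0"] allI)
    fix y
    show "\<bar>f y\<bar> \<le> max B 0"
    proof (cases "y \<in> cball 0 R")
      case True then have "norm (f y) \<le> B" using B by blast
      then show ?thesis by simp
    next
      case False then show ?thesis using assms(2) by simp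
    qed
  qed
qed

lemma cs_uc:
  fixes f :: "real^'d \<Rightarrow> real"
  assumes "continuous_on UNIV f" "\<And>y. y \<notin> cball 0 R \<Longrightarrow> f y = 0"
  shows "\<forall>e>0. \<exists>d>0. \<forall>x y. dist x y < d \<longrightarrow> \<bar>f x - f y\<bar> < e"
proof (intro allI impI)
  fix e :: real assume e: "e > 0"
  have "uniformly_continuous_on (cball 0 (R+1)) f"
    using compact_uniformly_continuous[OF continuous_on_subset[OF assms(1)]] by auto
  then obtain d where d: "d > 0" "\<And>x y. x \<in> cball 0 (R+1) \<Longrightarrow> y \<in> cball 0 (R+1) \<Longrightarrow> dist y x < d \<Longrightarrow> dist (f y) (f x) < e"
    using e unfolding uniformly_continuous_on_def by metis
  show "\<exists>d>0. \<forall>x y. dist x y < d \<longrightarrow> \<bar>f x - f y\<bar> < e"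
  proof (intro exI[of _ "min d 1"] conjI allI impI)
    show "0 < min d 1" using d by simp
    fix x y :: "real^'d" assume xy: "dist x y < min d 1"
    show "\<bar>f x - f y\<bar> < e"
    proof (cases "x \<in> cball 0 R \<or> y \<in> cball 0 R")
      case True
      then have "x \<in> cball 0 (R+1)" "y \<in> cball 0 (R+1)"
        using xy by (auto simp: dist_norm norm_minus_commute) (smt (verit, best) norm_triangle_ineq2 norm_minus_commute)+
      then show ?thesis using d(2)[of y x] xy by (simp add: dist_real_def)
    next
      case False then show ?thesis using assms(2) e by simp
    qed
  qed
qed

lemma set_integrable_cont:
  fixes f :: "real^'d \<Rightarrow> real"
  assumes "continuous_on UNIV f" "\<And>y. \<bar>f y\<bar> \<le> B" "A \<in> sets lborel" "emeasure lborel A < \<infinity>"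
  shows "set_integrable lborel A f"
  unfolding set_integrable_def
  apply (rule integrableI_bounded_set[where A=A and B=B])
  using assms borel_measurable_continuous_onI[OF assms(1)] by (auto split: split_indicator)


lemma set_int_bound:
  fixes g :: "real^'d \<Rightarrow> real"
  assumes "set_integrable lborel A g" "\<And>z. z \<in> A \<Longrightarrow> \<bar>g z\<bar> \<le> c" "A \<in> sets lborel" "emeasure lborel A < \<infinity>"
  shows "\<bar>LINT z:A|lborel. g z\<bar> \<le> measure lborel A * c"
proof -
  have i1: "integrable lborel (\<lambda>z. indicator A z *\<^sub>R g z)" using assms(1) by (simp add: set_integrable_def)
  have i2: "integrable lborel (\<lambda>z. indicator A z * c)"
    using assms(3,4) by (intro integrable_mult_left) (simp add: integrable_indicator_iff less_top[symmetric])
  have "\<bar>LINT z:A|lborel. g z\<bar> \<le> (\<integral>z. \<bar>indicator A z *\<^sub>R g z\<bar> \<partial>lborel)"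
    unfolding set_lebesgue_integral_def by (rule integral_abs_bound)
  also have "\<dots> \<le> (\<integral>z. indicator A z * c \<partial>lborel)"
  proof (rule integral_mono[OF _ i2])
    show "integrable lborel (\<lambda>z. \<bar>indicator A z *\<^sub>R g z\<bar>)" using integrable_abs[OF i1] .
  qed (use assms(2) in \<open>auto split: split_indicator\<close>)
  also have "\<dots> = measure lborel A * c"
    using assms(3,4) by (simp add: measure_def less_top[symmetric])
  finally show ?thesis .
qed

lemma partials_supp:
  assumes "smooth \<rho>" "\<And>y. y \<notin> cball 0 R \<Longrightarrow> \<rho> y = 0"
  shows "y \<notin> cball 0 R \<Longrightarrow> partials ks \<rho> y = 0"
  using partials_zero_open[OF assms(1), of "- cball 0 R"] assms(2) by auto

lemma conv_hasd:
  fixes \<rho> :: "real^'d \<Rightarrow> real"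
  assumes sm: "smooth \<rho>" and supp: "\<And>y. y \<notin> cball 0 R \<Longrightarrow> \<rho> y = 0"
    and A: "A \<in> sets lborel" "emeasure lborel A < \<infinity>"
  shows "((\<lambda>y. LINT z:A|lborel. partials ks \<rho> (y - z)) has_derivative
          (\<lambda>v. \<Sum>i\<in>UNIV. v$i * (LINT z:A|lborel. partials (i#ks) \<rho> (y - z)))) (at y)"
proof -
  define P where "P = partials ks \<rho>"
  define Q where "Q i = partials (i#ks) \<rho>" for i
  have cont: "continuous_on UNIV (partials ks' \<rho>)" for ks' using smooth_cont[OF sm] .
  have sup': "\<And>y. y \<notin> cball 0 R \<Longrightarrow> partials ks' \<rho> y = 0" for ks' using partials_supp[OF sm supp] .
  have bnd: "\<exists>B. \<forall>y. \<bar>partials ks' \<rho> y\<bar> \<le> B" for ks' using cs_bounded[OF cont sup'] .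
  have uc: "\<forall>e>0. \<exists>d>0. \<forall>x y. dist x y < d \<longrightarrow> \<bar>partials ks' \<rho> x - partials ks' \<rho> y\<bar> < e" for ks'
    using cs_uc[OF cont sup'] .
  have integ: "set_integrable lborel A (\<lambda>z. partials ks' \<rho> (y' - z))" for ks' y'
  proof -
    obtain B where B: "\<forall>y. \<bar>partials ks' \<rho> y\<bar> \<le> B" using bnd by blast
    have "continuous_on UNIV (\<lambda>z. partials ks' \<rho> (y' - z))"
      by (rule continuous_on_compose2[OF cont]) (auto intro!: continuous_intros)
    then show ?thesis using set_integrable_cont[of _ B, OF _ _ A] B by auto
  qed
  define m where "m = measure lborel A"
  have m0: "m \<ge> 0" unfolding m_def by simp
  show ?thesis
    unfolding has_derivative_at_alt
  proof (intro conjI allI impI)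
    show "bounded_linear (\<lambda>v. \<Sum>i\<in>UNIV. v$i * (LINT z:A|lborel. partials (i#ks) \<rho> (y - z)))"
      by (auto intro!: bounded_linear_intros)
    fix e :: real assume e: "e > 0"
    define c where "c = e / (m + 1) / real CARD('d)"
    have c: "c > 0" using e m0 by (simp add: c_def)
    have "\<forall>i. \<exists>d>0. \<forall>x y. dist x y < d \<longrightarrow> \<bar>Q i x - Q i y\<bar> < c"
      using uc c unfolding Q_def by blast
    then obtain d where d: "\<And>i. d i > 0" "\<And>i x y. dist x y < d i \<Longrightarrow> \<bar>Q i x - Q i y\<bar> < c"
      by metis
    define d0 where "d0 = Min (range d)"
    have d0: "d0 > 0" unfolding d0_def using d(1) by (simp add: Min_gr_iff)
    have d0le: "d0 \<le> d i" for i unfolding d0_def by simp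
    have pw: "\<bar>P (u + v) - P u - (\<Sum>i\<in>UNIV. v$i * Q i u)\<bar> \<le> norm v * (real CARD('d) * c)"
      if v: "norm v < d0" for u v
    proof -
      have hd: "(P has_derivative frechet_derivative P (at x)) (at x within ball u d0)" for x
        unfolding P_def using smooth_hasd[OF sm] has_derivative_at_withinI by blast
      have fa: "frechet_derivative P (at x) w = (\<Sum>i\<in>UNIV. w$i * Q i x)" for x w
        unfolding P_def Q_def by (rule frechet_axis[OF sm])
      have on: "onorm (frechet_derivative P (at x) - frechet_derivative P (at u)) \<le> real CARD('d) * c"
        if x: "x \<in> ball u d0" for x
      proof (rule onorm_le)
        fix w :: "real^'d"
        have "norm ((frechet_derivative P (at x) - frechet_derivative P (at u)) w)
              = \<bar>\<Sum>i\<in>UNIV. w$i * (Q i x - Q i u)\<bar>"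
          by (simp add: fa sum_subtractf algebra_simps)
        also have "\<dots> \<le> (\<Sum>i\<in>UNIV. \<bar>w$i * (Q i x - Q i u)\<bar>)" by (rule sum_abs)
        also have "\<dots> \<le> (\<Sum>i\<in>(UNIV::'d set). norm w * c)"
        proof (rule sum_mono)
          fix i
          have "dist x u < d i" using x d0le[of i] by (simp add: dist_commute)
          then have "\<bar>Q i x - Q i u\<bar> \<le> c" using d(2) by force
          then show "\<bar>w$i * (Q i x - Q i u)\<bar> \<le> norm w * c"
            unfolding abs_mult by (intro mult_mono) (auto simp: component_le_norm_cart)
        qed
        also have "\<dots> = real CARD('d) * c * norm w" by simp
        finally show "norm ((frechet_derivative P (at x) - frechet_derivative P (at u)) w) \<le> real CARD('d) * c * norm w" .
      qed
      have seg: "u + t *\<^sub>R (u + v - u) \<in> ball u d0" if "t \<in> {0..1}" for t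
        using that v by (auto simp: dist_norm) (smt (verit, ccfv_SIG) mult_le_cancel_right2 norm_ge_zero)
      have "norm (P (u + v) - P u - frechet_derivative P (at u) (u + v - u)) \<le> norm (u + v - u) * (real CARD('d) * c)"
        by (rule differentiable_bound_linearization[OF seg hd on]) (use d0 in auto)
      then show ?thesis by (simp add: fa)
    qed
    show "\<exists>d>0. \<forall>y'. norm (y' - y) < d \<longrightarrow>
       norm ((LINT z:A|lborel. partials ks \<rho> (y' - z)) - (LINT z:A|lborel. partials ks \<rho> (y - z)) -
             (\<Sum>i\<in>UNIV. (y' - y)$i * (LINT z:A|lborel. partials (i#ks) \<rho> (y - z)))) \<le> e * norm (y' - y)"
    proof (intro exI[of _ d0] conjI allI impI d0)
      fix y' :: "real^'d" assume y': "norm (y' - y) < d0"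
      define v where "v = y' - y"
      have iP: "set_integrable lborel A (\<lambda>z. P (w - z))" for w unfolding P_def by (rule integ)
      have iQ: "set_integrable lborel A (\<lambda>z. v$i * Q i (w - z))" for w i
        using set_integrable_mult_right[OF integ[of "i#ks" w], of "v$i"] unfolding Q_def .
      have iS: "set_integrable lborel A (\<lambda>z. \<Sum>i\<in>UNIV. v$i * Q i (y - z))"
      proof -
        have "integrable lborel (\<lambda>z. \<Sum>i\<in>UNIV. indicator A z *\<^sub>R (v$i * Q i (y - z)))"
          by (rule Bochner_Integration.integrable_sum) (use iQ[unfolded set_integrable_def] in blast)
        then show ?thesis unfolding set_integrable_def scaleR_sum_right .
      qed
      have sI: "(LINT z:A|lborel. \<Sum>i\<in>UNIV. v$i * Q i (y - z)) = (\<Sum>i\<in>UNIV. v$i * (LINT z:A|lborel. Q i (y - z)))"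
      proof -
        have "(LINT z:A|lborel. \<Sum>i\<in>UNIV. v$i * Q i (y - z)) = (\<integral>z. (\<Sum>i\<in>UNIV. indicator A z *\<^sub>R (v$i * Q i (y - z))) \<partial>lborel)"
          by (simp only: set_lebesgue_integral_def scaleR_sum_right)
        also have "\<dots> = (\<Sum>i\<in>UNIV. (\<integral>z. indicator A z *\<^sub>R (v$i * Q i (y - z)) \<partial>lborel))"
          by (rule Bochner_Integration.integral_sum) (use iQ[unfolded set_integrable_def] in blast)
        also have "\<dots> = (\<Sum>i\<in>UNIV. v$i * (LINT z:A|lborel. Q i (y - z)))"
          unfolding set_lebesgue_integral_def by (simp add: mult.left_commute)
        finally show ?thesis .
      qed
      have "(LINT z:A|lborel. partials ks \<rho> (y' - z)) - (LINT z:A|lborel. partials ks \<rho> (y - z)) -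
             (\<Sum>i\<in>UNIV. v$i * (LINT z:A|lborel. partials (i#ks) \<rho> (y - z)))
            = (LINT z:A|lborel. P (y' - z)) - (LINT z:A|lborel. P (y - z)) -
             (\<Sum>i\<in>UNIV. v$i * (LINT z:A|lborel. Q i (y - z)))"
        unfolding P_def Q_def ..
      also have "\<dots> = (LINT z:A|lborel. P (y' - z) - P (y - z) - (\<Sum>i\<in>UNIV. v$i * Q i (y - z)))"
        by (subst set_integral_diff[OF set_integral_diff(1)[OF iP iP] iS],
            subst set_integral_diff(2)[OF iP iP], subst sI) simp
      also have "\<bar>\<dots>\<bar> \<le> m * (norm v * (real CARD('d) * c))"
        unfolding m_def
      proof (rule set_int_bound[OF _ _ A])
        show "set_integrable lborel A (\<lambda>z. P (y' - z) - P (y - z) - (\<Sum>i\<in>UNIV. v $ i * Q i (y - z)))"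
          by (intro set_integral_diff(1) iP iS)
        fix z
        have "y' - z = (y - z) + v" by (simp add: v_def)
        then show "\<bar>P (y' - z) - P (y - z) - (\<Sum>i\<in>UNIV. v $ i * Q i (y - z))\<bar> \<le> norm v * (real CARD('d) * c)"
          using pw[of v "y - z"] y' by (simp add: v_def)
      qed
      also have "\<dots> \<le> e * norm v"
      proof -
        have h1: "real CARD('d) * c = e / (m+1)" unfolding c_def by simp
        have "m * (e / (m+1)) \<le> e" using e m0 by (simp add: field_simps)
        then have "m * (real CARD('d) * c) \<le> e" using h1 by simp
        then have "m * (real CARD('d) * c) * norm v \<le> e * norm v" by (rule mult_right_mono) simp
        then show ?thesis by (simp add: algebra_simps)
      qed
      finally show "norm ((LINT z:A|lborel. partials ks \<rho> (y' - z)) - (LINT z:A|lborel. partials ks \<rho> (y - z)) -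
             (\<Sum>i\<in>UNIV. (y' - y)$i * (LINT z:A|lborel. partials (i#ks) \<rho> (y - z)))) \<le> e * norm (y' - y)"
        by (simp add: v_def)
    qed
  qed
qed


lemma sum_axis: "(\<Sum>j\<in>UNIV. (axis i 1 :: real^'d) $ j * c j) = c i"
proof -
  have "(\<Sum>j\<in>UNIV. (axis i 1 :: real^'d) $ j * c j) = (\<Sum>j\<in>UNIV. if j = i then c j else 0)"
    by (intro sum.cong) (auto simp: axis_def)
  then show ?thesis by simp
qed

lemma conv_partials:
  fixes \<rho> :: "real^'d \<Rightarrow> real"
  assumes sm: "smooth \<rho>" and supp: "\<And>y. y \<notin> cball 0 R \<Longrightarrow> \<rho> y = 0"
    and A: "A \<in> sets lborel" "emeasure lborel A < \<infinity>"
  shows "partials ks (\<lambda>y. LINT z:A|lborel. \<rho> (y - z)) = (\<lambda>y. LINT z:A|lborel. partials ks \<rho> (y - z))"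
proof (induction ks)
  case Nil then show ?case by simp
next
  case (Cons i ks)
  show ?case
  proof
    fix x
    have hd: "((\<lambda>y. LINT z:A|lborel. partials ks \<rho> (y - z)) has_derivative
          (\<lambda>v. \<Sum>i\<in>UNIV. v$i * (LINT z:A|lborel. partials (i#ks) \<rho> (x - z)))) (at x)"
      by (rule conv_hasd[OF sm, where R=R]) (use supp A in auto)
    have "partials (i # ks) (\<lambda>y. LINT z:A|lborel. \<rho> (y - z)) x =
       (\<Sum>j\<in>UNIV. axis i 1 $ j * (LINT z:A|lborel. partials (j#ks) \<rho> (x - z)))"
      by (rule partials_Cons_eq[OF Cons hd])
    also have "\<dots> = (LINT z:A|lborel. partials (i#ks) \<rho> (x - z))" by (rule sum_axis)
    finally show "partials (i # ks) (\<lambda>y. LINT z:A|lborel. \<rho> (y - z)) x = (LINT z:A|lborel. partials (i#ks) \<rho> (x - z))" .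
  qed
qed

lemma smooth_conv:
  fixes \<rho> :: "real^'d \<Rightarrow> real"
  assumes sm: "smooth \<rho>" and supp: "\<And>y. y \<notin> cball 0 R \<Longrightarrow> \<rho> y = 0"
    and A: "A \<in> sets lborel" "emeasure lborel A < \<infinity>"
  shows "smooth (\<lambda>y. LINT z:A|lborel. \<rho> (y - z))"
proof -
  have hd: "((\<lambda>y. LINT z:A|lborel. partials ks \<rho> (y - z)) has_derivative
          (\<lambda>v. \<Sum>i\<in>UNIV. v$i * (LINT z:A|lborel. partials (i#ks) \<rho> (x - z)))) (at x)" for ks x
    by (rule conv_hasd[OF sm, where R=R]) (use supp A in auto)
  have cp: "partials ks (\<lambda>y. LINT z:A|lborel. \<rho> (y - z)) = (\<lambda>y. LINT z:A|lborel. partials ks \<rho> (y - z))" for ks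
    by (rule conv_partials[OF sm, where R=R]) (use supp A in auto)
  show ?thesis unfolding smooth_def cp differentiable_def using hd by blast
qed

lemma ball_in_open:
  fixes \<Omega> :: "'a::real_normed_vector set"
  assumes "open \<Omega>" "z \<in> \<Omega>" "infdist z (frontier \<Omega>) > r"
  shows "ball z r \<subseteq> \<Omega>"
proof (cases "r > 0")
  case False then show ?thesis by (simp add: ball_empty)
next
  case True
  show ?thesis
proof (rule ccontr)
  assume "\<not> ball z r \<subseteq> \<Omega>"
  then have "ball z r - \<Omega> \<noteq> {}" by blast
  moreover have "ball z r \<inter> \<Omega> \<noteq> {}"
    using True assms(2) centre_in_ball[of z r] by blast
  ultimately have "ball z r \<inter> frontier \<Omega> \<noteq> {}"
    by (intro connected_Int_frontier) auto
  then obtain q where q: "q \<in> ball z r" "q \<in> frontier \<Omega>" by blast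
  have "infdist z (frontier \<Omega>) \<le> dist z q" by (rule infdist_le[OF q(2)])
  then show False using q(1) assms(3) by simp
qed
qed

lemma infdist_lt_ex:
  assumes "A \<noteq> {}" "infdist x A < r"
  shows "\<exists>a\<in>A. dist x a < r"
  using assms by (simp add: infdist_notempty cINF_less_iff)

lemma Omega_tau_sets:
  assumes "open \<Omega>" "bounded \<Omega>"
  shows "open (Omega_tau \<Omega> \<tau>)" "Omega_tau \<Omega> \<tau> \<subseteq> \<Omega>" "bounded (Omega_tau \<Omega> \<tau>)"
    "Omega_tau \<Omega> \<tau> \<in> sets lborel" "emeasure lborel (Omega_tau \<Omega> \<tau>) < \<infinity>"
proof -
  have "Omega_tau \<Omega> \<tau> = \<Omega> \<inter> {x. 4 * \<tau> < infdist x (frontier \<Omega>)}"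
    unfolding Omega_tau_def by auto
  moreover have "open {x. 4 * \<tau> < infdist x (frontier \<Omega>)}"
    by (intro open_Collect_less continuous_intros)
  ultimately show o: "open (Omega_tau \<Omega> \<tau>)" using assms(1) by auto
  show s: "Omega_tau \<Omega> \<tau> \<subseteq> \<Omega>" unfolding Omega_tau_def by auto
  show b: "bounded (Omega_tau \<Omega> \<tau>)" using bounded_subset[OF assms(2) s] .
  show "Omega_tau \<Omega> \<tau> \<in> sets lborel" using o by simp
  show "emeasure lborel (Omega_tau \<Omega> \<tau>) < \<infinity>" using emeasure_bounded_finite[OF b] .
qed


lemma sum_list_const_map: "(\<Sum>p\<leftarrow>L. (c::real)) = real (length L) * c"
  by (induction L) (auto simp: algebra_simps)

lemma sum_list_diff_map: "(\<Sum>p\<leftarrow>L. f p - g p) = (\<Sum>p\<leftarrow>L. (f p::real)) - (\<Sum>p\<leftarrow>L. g p)"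
  by (induction L) auto

lemma finite_bound:
  fixes f :: "'a \<Rightarrow> 'b \<Rightarrow> real"
  assumes "finite S" "\<And>a. a \<in> S \<Longrightarrow> \<exists>M. \<forall>y. \<bar>f a y\<bar> \<le> M"
  shows "\<exists>M. \<forall>a\<in>S. \<forall>y. \<bar>f a y\<bar> \<le> M"
  using assms
proof (induction S rule: finite_induct)
  case empty then show ?case by auto
next
  case (insert a S)
  obtain M1 where M1: "\<forall>y. \<bar>f a y\<bar> \<le> M1" using insert by blast
  obtain M2 where M2: "\<forall>b\<in>S. \<forall>y. \<bar>f b y\<bar> \<le> M2" using insert by blast
  show ?case using M1 M2 by (intro exI[of _ "max M1 M2"]) (auto simp: le_max_iff_disj)
qed

lemma finite_lists_le: "finite {ks::'d::finite list. length ks \<le> s}"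
  using finite_lists_length_le[of "UNIV::'d set" s] by simp

lemma Hs_bound:
  fixes f :: "real^'d \<Rightarrow> real"
  assumes sm: "smooth f" and K: "closed K" "bounded K" and supp: "\<And>y. f y \<noteq> 0 \<Longrightarrow> y \<in> K"
    and bnd: "\<And>ks y. length ks \<le> s \<Longrightarrow> \<bar>partials ks f y\<bar> \<le> \<eta>"
  shows "Hs_norm s f \<le> sqrt (real (card {ks::'d list. length ks \<le> s}) * (\<eta>\<^sup>2 * measure lborel K))"
proof -
  have eta: "\<eta> \<ge> 0" using bnd[of "[]" 0] by simp
  have z: "partials ks f y = 0" if "y \<notin> K" for ks y
    using partials_zero_open[OF sm, of "- K"] K(1) supp that by auto
  have Ks: "K \<in> sets lborel" using K(1) by simp
  have Kf: "emeasure lborel K < \<infinity>" using emeasure_bounded_finite[OF K(2)] .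
  have each: "(\<integral>x. (partials ks f x)\<^sup>2 \<partial>lborel) \<le> \<eta>\<^sup>2 * measure lborel K" if ks: "length ks \<le> s" for ks
  proof -
    have meas: "(\<lambda>x. (partials ks f x)\<^sup>2) \<in> borel_measurable lborel"
      using borel_measurable_continuous_onI[OF smooth_cont[OF sm, of ks]] by simp
    have i1: "integrable lborel (\<lambda>x. (partials ks f x)\<^sup>2)"
    proof (rule integrableI_bounded_set[where A=K and B="\<eta>\<^sup>2", OF Ks meas Kf])
      show "AE x in lborel. x \<in> K \<longrightarrow> norm ((partials ks f x)\<^sup>2) \<le> \<eta>\<^sup>2"
      proof (rule AE_I2, intro impI)
        fix x
        have "(partials ks f x)\<^sup>2 \<le> \<eta>\<^sup>2" using power_mono[OF bnd[OF ks, of x] abs_ge_zero, of 2] by simp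
        then show "norm ((partials ks f x)\<^sup>2) \<le> \<eta>\<^sup>2" by simp
      qed
      show "AE x in lborel. x \<notin> K \<longrightarrow> (partials ks f x)\<^sup>2 = 0" using z by auto
    qed
    have i2: "integrable lborel (\<lambda>x. indicator K x * \<eta>\<^sup>2)"
      using Ks Kf by (intro integrable_mult_left) (simp add: integrable_indicator_iff less_top[symmetric])
    have "(\<integral>x. (partials ks f x)\<^sup>2 \<partial>lborel) \<le> (\<integral>x. indicator K x * \<eta>\<^sup>2 \<partial>lborel)"
    proof (rule integral_mono[OF i1 i2])
      fix x
      show "(partials ks f x)\<^sup>2 \<le> indicator K x * \<eta>\<^sup>2"
        using power_mono[OF bnd[OF ks, of x] abs_ge_zero, of 2] z[of x] by (auto split: split_indicator)
    qed
    also have "\<dots> = \<eta>\<^sup>2 * measure lborel K"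
      using Ks Kf by (simp add: measure_def less_top[symmetric])
    finally show ?thesis .
  qed
  have "(\<Sum>ks\<in>{ks::'d list. length ks \<le> s}. \<integral>x. (partials ks f x)\<^sup>2 \<partial>lborel)
      \<le> (\<Sum>ks\<in>{ks::'d list. length ks \<le> s}. \<eta>\<^sup>2 * measure lborel K)"
    using each by (intro sum_mono) auto
  then show ?thesis unfolding Hs_norm_def by (simp add: real_sqrt_le_mono)
qed


context
  fixes \<Omega> :: "(real^'d) set" and \<tau> :: real and \<rho> :: "real^'d \<Rightarrow> real"
  assumes Oo: "open \<Omega>" and Ob: "bounded \<Omega>" and t0: "\<tau> > 0" and moll: "mollifier \<tau> \<rho>"
begin

lemma rho_smooth: "smooth \<rho>" using moll by (simp add: mollifier_def)

lemma rho_supp: "y \<notin> cball 0 \<tau> \<Longrightarrow> \<rho> y = 0"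
  using moll unfolding mollifier_def by auto

lemma rho_supp': "\<tau> \<le> norm y \<Longrightarrow> \<rho> y = 0"
  using moll unfolding mollifier_def by (auto simp: subset_iff)

lemma psi_eq: "psi_tau \<Omega> \<tau> \<rho> = (\<lambda>y. LINT z:Omega_tau \<Omega> \<tau>|lborel. \<rho> (y - z))"
  by (simp add: psi_tau_def fun_eq_iff)

lemma psi_smooth: "smooth (psi_tau \<Omega> \<tau> \<rho>)"
  unfolding psi_eq
  by (rule smooth_conv[OF rho_smooth, where R=\<tau>]) (use rho_supp Omega_tau_sets[OF Oo Ob] in auto)

lemma psi_nz: assumes "psi_tau \<Omega> \<tau> \<rho> y \<noteq> 0" shows "\<exists>z\<in>Omega_tau \<Omega> \<tau>. dist y z < \<tau>"
proof (rule ccontr)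
  assume "\<not> (\<exists>z\<in>Omega_tau \<Omega> \<tau>. dist y z < \<tau>)"
  then have "\<forall>z\<in>Omega_tau \<Omega> \<tau>. \<rho> (y - z) = 0" using rho_supp' by (auto simp: dist_norm not_less)
  then have "psi_tau \<Omega> \<tau> \<rho> y = (LINT z:Omega_tau \<Omega> \<tau>|lborel. 0)"
    unfolding psi_tau_def by (intro set_lebesgue_integral_cong) (use Omega_tau_sets[OF Oo Ob] in auto)
  then show False using assms by simp
qed

definition KK where "KK = {y. infdist y (Omega_tau \<Omega> \<tau>) \<le> \<tau>}"

lemma KK_closed: "closed KK"
  unfolding KK_def by (intro closed_Collect_le continuous_intros)

lemma KK_sub: assumes "Omega_tau \<Omega> \<tau> \<noteq> {}" shows "KK \<subseteq> \<Omega>"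
proof
  fix y assume "y \<in> KK"
  then have "infdist y (Omega_tau \<Omega> \<tau>) < 2 * \<tau>" using t0 by (simp add: KK_def)
  then obtain z where z: "z \<in> Omega_tau \<Omega> \<tau>" "dist y z < 2 * \<tau>" using infdist_lt_ex[OF assms] by blast
  then have "z \<in> \<Omega>" "infdist z (frontier \<Omega>) > 4 * \<tau>" by (auto simp: Omega_tau_def)
  then have "ball z (4 * \<tau>) \<subseteq> \<Omega>" by (rule ball_in_open[OF Oo])
  moreover have "y \<in> ball z (4 * \<tau>)" using z(2) t0 by (simp add: dist_commute)
  ultimately show "y \<in> \<Omega>" by blast
qed

lemma KK_bounded: assumes "Omega_tau \<Omega> \<tau> \<noteq> {}" shows "bounded KK"
  using bounded_subset[OF Ob KK_sub[OF assms]] .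

lemma psi_supp: assumes "psi_tau \<Omega> \<tau> \<rho> y \<noteq> 0" shows "y \<in> KK"
proof -
  obtain z where z: "z \<in> Omega_tau \<Omega> \<tau>" "dist y z < \<tau>" using psi_nz[OF assms] by blast
  have "infdist y (Omega_tau \<Omega> \<tau>) \<le> dist y z" by (rule infdist_le[OF z(1)])
  then show ?thesis using z(2) unfolding KK_def by simp
qed

lemma test_funI:
  assumes "Omega_tau \<Omega> \<tau> \<noteq> {}" "smooth f" "\<And>y. f y \<noteq> 0 \<Longrightarrow> y \<in> KK"
  shows "test_fun \<Omega> f"
proof -
  have c: "closure {x. f x \<noteq> 0} \<subseteq> KK"
    using assms(3) KK_closed by (intro closure_minimal) auto
  then have "compact (closure {x. f x \<noteq> 0})"
    using bounded_subset[OF KK_bounded[OF assms(1)] c] by (simp add: compact_eq_bounded_closed)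
  then show ?thesis unfolding test_fun_def using assms(2) c KK_sub[OF assms(1)] by auto
qed

definition FF where "FF x = (\<lambda>y. psi_tau \<Omega> \<tau> \<rho> y * \<rho> (x - y))"

lemma FF_smooth: "smooth (FF x)"
  unfolding FF_def by (intro smooth_mult psi_smooth smooth_refl rho_smooth)

lemma FF_supp: assumes "FF x y \<noteq> 0" shows "y \<in> KK"
proof -
  have "psi_tau \<Omega> \<tau> \<rho> y \<noteq> 0" using assms unfolding FF_def by auto
  then show ?thesis by (rule psi_supp)
qed

lemma FF_partials: "partials ks (FF x) y =
   (\<Sum>p\<leftarrow>leib ks. partials (fst p) (psi_tau \<Omega> \<tau> \<rho>) y * ((-1) ^ length (snd p) * partials (snd p) \<rho> (x - y)))"
  unfolding FF_def partials_mult[OF psi_smooth smooth_refl[OF rho_smooth]] partials_refl[OF rho_smooth] ..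


lemma sum_list_abs_map: "\<bar>\<Sum>p\<leftarrow>L. (f p::real)\<bar> \<le> (\<Sum>p\<leftarrow>L. \<bar>f p\<bar>)"
proof (induction L)
  case (Cons a L)
  have "\<bar>f a + (\<Sum>p\<leftarrow>L. f p)\<bar> \<le> \<bar>f a\<bar> + \<bar>\<Sum>p\<leftarrow>L. f p\<bar>" by (rule abs_triangle_ineq)
  then show ?case using Cons by simp
qed simp

lemma Hs_nonneg: "Hs_norm s f \<ge> 0"
  unfolding Hs_norm_def by (intro real_sqrt_ge_zero sum_nonneg integral_nonneg) auto

lemma R_cont:
  assumes Hm: "H_minus s \<Omega> h"
  shows "continuous_on UNIV (R_tau \<Omega> \<tau> \<rho> h)"
proof (cases "Omega_tau \<Omega> \<tau> = {}")
  case True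
  then have "psi_tau \<Omega> \<tau> \<rho> = (\<lambda>y. 0)" by (simp add: psi_eq set_lebesgue_integral_def)
  then have "R_tau \<Omega> \<tau> \<rho> h = (\<lambda>x. h (\<lambda>y. 0))" by (simp add: R_tau_def fun_eq_iff)
  then show ?thesis by simp
next
  case False
  note ne = False
  from Hm obtain C where lin: "\<And>f g a b. test_fun \<Omega> f \<Longrightarrow> test_fun \<Omega> g \<Longrightarrow> h (\<lambda>x. a * f x + b * g x) = a *\<^sub>R h f + b *\<^sub>R h g"
     and C: "\<And>f. test_fun \<Omega> f \<Longrightarrow> norm (h f) \<le> C * Hs_norm s f" unfolding H_minus_def by blast
  define C' where "C' = max C 1"
  have C'pos: "C' > 0" by (simp add: C'_def)
  have C': "norm (h f) \<le> C' * Hs_norm s f" if "test_fun \<Omega> f" for f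
  proof -
    have "C * Hs_norm s f \<le> C' * Hs_norm s f" by (intro mult_right_mono Hs_nonneg) (simp add: C'_def)
    then show ?thesis using C[OF that] by linarith
  qed
  define N where "N = real (card {ks::'d list. length ks \<le> s})"
  define mK where "mK = measure lborel KK"
  define Ms where "Ms = sqrt (N * mK)"
  have Ms0: "Ms \<ge> 0" unfolding Ms_def N_def mK_def by simp
  define Bs where "Bs = {b::'d list. length b \<le> s}"
  have finB: "finite Bs" unfolding Bs_def by (rule finite_lists_le)
  obtain RR where RR: "\<forall>x\<in>KK. norm x \<le> RR" using KK_bounded[OF ne] unfolding bounded_iff by blast
  have psi0: "partials a (psi_tau \<Omega> \<tau> \<rho>) y = 0" if "y \<notin> KK" for a y
    using partials_zero_open[OF psi_smooth, of "- KK"] KK_closed psi_supp that by auto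
  obtain Mp where Mp: "\<forall>a\<in>Bs. \<forall>y. \<bar>partials a (psi_tau \<Omega> \<tau> \<rho>) y\<bar> \<le> Mp"
  proof -
    have "\<exists>M. \<forall>a\<in>Bs. \<forall>y. \<bar>partials a (psi_tau \<Omega> \<tau> \<rho>) y\<bar> \<le> M"
    proof (rule finite_bound[OF finB])
      fix a
      show "\<exists>M. \<forall>y. \<bar>partials a (psi_tau \<Omega> \<tau> \<rho>) y\<bar> \<le> M"
      proof (rule cs_bounded[OF smooth_cont[OF psi_smooth], where R=RR])
        fix y :: "real^'d" assume "y \<notin> cball 0 RR"
        then have "y \<notin> KK" using RR by auto
        then show "partials a (psi_tau \<Omega> \<tau> \<rho>) y = 0" by (rule psi0)
      qed
    qed
    then show ?thesis using that by blast
  qed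
  have Mp0: "Mp \<ge> 0" using Mp[rule_format, of "[]" 0] unfolding Bs_def by auto
  show ?thesis
  proof (rule continuous_at_imp_continuous_on, intro ballI)
    fix x :: "real^'d"
    show "isCont (R_tau \<Omega> \<tau> \<rho> h) x"
      unfolding continuous_at tendsto_iff
    proof (intro allI impI)
      fix e :: real assume e: "e > 0"
      define \<eta> where "\<eta> = e / (C' * (Ms + 1))"
      have \<eta>0: "\<eta> > 0" unfolding \<eta>_def using e C'pos Ms0 by simp
      define \<delta> where "\<delta> = \<eta> / (2 ^ s * (Mp + 1))"
      have \<delta>0: "\<delta> > 0" unfolding \<delta>_def using \<eta>0 Mp0 by simp
      have evb: "\<forall>b\<in>Bs. eventually (\<lambda>x'. \<forall>y. \<bar>partials b \<rho> (x' - y) - partials b \<rho> (x - y)\<bar> < \<delta>) (at x)"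
      proof
        fix b assume "b \<in> Bs"
        have pz: "partials b \<rho> y = 0" if "y \<notin> cball 0 \<tau>" for y
          using partials_zero_open[OF rho_smooth, of "- cball 0 \<tau>"] rho_supp that by auto
        obtain d where d: "d > 0" "\<And>u w. dist u w < d \<Longrightarrow> \<bar>partials b \<rho> u - partials b \<rho> w\<bar> < \<delta>"
          using cs_uc[OF smooth_cont[OF rho_smooth] pz] \<delta>0 by blast
        show "eventually (\<lambda>x'. \<forall>y. \<bar>partials b \<rho> (x' - y) - partials b \<rho> (x - y)\<bar> < \<delta>) (at x)"
          unfolding eventually_at
        proof (intro exI[of _ d] conjI d(1) ballI impI allI)
          fix x' y assume "x' \<noteq> x \<and> dist x' x < d"
          moreover have "dist (x' - y) (x - y) = dist x' x" by (simp add: dist_norm)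
          ultimately show "\<bar>partials b \<rho> (x' - y) - partials b \<rho> (x - y)\<bar> < \<delta>" using d(2) by auto
        qed
      qed
      have ev: "eventually (\<lambda>x'. \<forall>b\<in>Bs. \<forall>y. \<bar>partials b \<rho> (x' - y) - partials b \<rho> (x - y)\<bar> < \<delta>) (at x)"
        by (rule eventually_ball_finite[OF finB evb])
      show "eventually (\<lambda>x'. dist (R_tau \<Omega> \<tau> \<rho> h x') (R_tau \<Omega> \<tau> \<rho> h x) < e) (at x)"
        using ev
      proof (rule eventually_mono)
        fix x' assume H: "\<forall>b\<in>Bs. \<forall>y. \<bar>partials b \<rho> (x' - y) - partials b \<rho> (x - y)\<bar> < \<delta>"
        define D where "D = (\<lambda>y. 1 * FF x' y + (-1) * FF x y)"
        have tf1: "test_fun \<Omega> (FF x')" by (rule test_funI[OF ne FF_smooth FF_supp])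
        have tf2: "test_fun \<Omega> (FF x)" by (rule test_funI[OF ne FF_smooth FF_supp])
        have smD: "smooth D" unfolding D_def by (intro smooth_lincomb FF_smooth)
        have suppD: "y \<in> KK" if "D y \<noteq> 0" for y
          using that FF_supp[of x' y] FF_supp[of x y] unfolding D_def by fastforce
        have tD: "test_fun \<Omega> D" by (rule test_funI[OF ne smD suppD])
        have hD: "h D = h (FF x') - h (FF x)" unfolding D_def using lin[OF tf1 tf2, of 1 "-1"] by simp
        have Rx: "R_tau \<Omega> \<tau> \<rho> h z = h (FF z)" for z by (simp add: R_tau_def FF_def)
        have pb: "\<bar>partials ks D y\<bar> \<le> \<eta>" if ks: "length ks \<le> s" for ks y
        proof -
          have "partials ks D y = partials ks (FF x') y - partials ks (FF x) y"
            unfolding D_def partials_lincomb[OF FF_smooth FF_smooth] by simp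
          also have "\<dots> = (\<Sum>p\<leftarrow>leib ks. partials (fst p) (psi_tau \<Omega> \<tau> \<rho>) y * ((-1) ^ length (snd p) *
                 (partials (snd p) \<rho> (x' - y) - partials (snd p) \<rho> (x - y))))"
            unfolding FF_partials sum_list_diff_map[symmetric] by (simp add: algebra_simps)
          finally have eq: "partials ks D y = \<dots>" .
          have "\<bar>partials ks D y\<bar> \<le> (\<Sum>p\<leftarrow>leib ks. \<bar>partials (fst p) (psi_tau \<Omega> \<tau> \<rho>) y * ((-1) ^ length (snd p) *
                 (partials (snd p) \<rho> (x' - y) - partials (snd p) \<rho> (x - y)))\<bar>)"
            unfolding eq by (rule sum_list_abs_map)
          also have "\<dots> \<le> (\<Sum>p\<leftarrow>leib ks. Mp * \<delta>)"
          proof (rule sum_list_mono)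
            fix p assume p: "p \<in> set (leib ks)"
            then have "fst p \<in> Bs" "snd p \<in> Bs" using leib_length[OF p] ks unfolding Bs_def by auto
            then have a1: "\<bar>partials (fst p) (psi_tau \<Omega> \<tau> \<rho>) y\<bar> \<le> Mp"
              and a2: "\<bar>partials (snd p) \<rho> (x' - y) - partials (snd p) \<rho> (x - y)\<bar> \<le> \<delta>"
              using Mp H by (auto intro: less_imp_le)
            show "\<bar>partials (fst p) (psi_tau \<Omega> \<tau> \<rho>) y * ((-1) ^ length (snd p) *
                 (partials (snd p) \<rho> (x' - y) - partials (snd p) \<rho> (x - y)))\<bar> \<le> Mp * \<delta>"
              unfolding abs_mult power_abs using a1 a2 by (simp add: mult_mono Mp0)
          qed
          also have "\<dots> = 2 ^ length ks * (Mp * \<delta>)" by (simp add: sum_list_const_map leib_len)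
          also have "\<dots> \<le> 2 ^ s * (Mp * \<delta>)"
            using ks Mp0 \<delta>0 by (intro mult_right_mono) (auto intro: power_increasing)
          also have "\<dots> \<le> \<eta>"
          proof -
            have p: "(2::real)^s * (Mp+1) \<noteq> 0" "Mp + 1 \<noteq> 0" using Mp0 by auto
            have "2 ^ s * (Mp * \<delta>) = \<eta> * (Mp / (Mp + 1))" unfolding \<delta>_def using p by (simp add: field_simps)
            also have "\<dots> \<le> \<eta> * 1" using \<eta>0 Mp0 by (intro mult_left_mono) auto
            finally show ?thesis by simp
          qed
          finally show ?thesis .
        qed
        have "Hs_norm s D \<le> sqrt (N * (\<eta>\<^sup>2 * mK))"
          unfolding N_def mK_def by (rule Hs_bound[OF smD KK_closed KK_bounded[OF ne] suppD pb])
        also have "\<dots> = \<eta> * Ms" unfolding Ms_def using \<eta>0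
          by (simp add: real_sqrt_mult algebra_simps)
        finally have Hs: "Hs_norm s D \<le> \<eta> * Ms" .
        have "dist (R_tau \<Omega> \<tau> \<rho> h x') (R_tau \<Omega> \<tau> \<rho> h x) = norm (h D)"
          unfolding Rx hD by (simp add: dist_norm)
        also have "\<dots> \<le> C' * Hs_norm s D" by (rule C'[OF tD])
        also have "\<dots> \<le> C' * (\<eta> * Ms)" using Hs C'pos by (simp add: mult_left_mono)
        also have "\<dots> < e"
        proof -
          have p: "C' * (Ms+1) \<noteq> 0" "Ms + 1 \<noteq> 0" "C' \<noteq> 0" using C'pos Ms0 by auto
          have "C' * (\<eta> * Ms) = e * (Ms / (Ms + 1))" unfolding \<eta>_def using p by (simp add: field_simps)
          also have "\<dots> < e * 1" using e Ms0 by (intro mult_strict_left_mono) auto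
          finally show ?thesis by simp
        qed
        finally show "dist (R_tau \<Omega> \<tau> \<rho> h x') (R_tau \<Omega> \<tau> \<rho> h x) < e" .
      qed
    qed
  qed
qed

end


lemma integrable_bdd:
  fixes f :: "'a::topological_space \<Rightarrow> real"
  assumes "prob_space M" "sets M = sets borel" "f \<in> borel_measurable borel" "\<And>x. \<bar>f x\<bar> \<le> B"
  shows "integrable M f"
proof -
  interpret prob_space M by fact
  show ?thesis
    by (rule integrable_const_bound[where B=B]) (use assms measurable_cong_sets[OF assms(2) refl] in auto)
qed

context
  fixes \<mu> \<nu> :: "'a::{metric_space, second_countable_topology} measure" and I :: "'i set" and \<theta> :: "'i \<Rightarrow> 'a \<Rightarrow> real"
  assumes \<mu>p: "prob_space \<mu>" and \<mu>s[measurable_cong]: "sets \<mu> = sets borel"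
    and \<nu>p: "prob_space \<nu>" and \<nu>s[measurable_cong]: "sets \<nu> = sets borel"
    and finI: "finite I"
    and \<theta>m[measurable]: "\<And>k. k \<in> I \<Longrightarrow> \<theta> k \<in> borel_measurable borel"
    and \<theta>nn: "\<And>k z. k \<in> I \<Longrightarrow> 0 \<le> \<theta> k z"
    and \<theta>le: "\<And>z. (\<Sum>k\<in>I. \<theta> k z) \<le> 1"
begin

lemma \<theta>le1: "k \<in> I \<Longrightarrow> \<theta> k z \<le> 1"
proof -
  assume k: "k \<in> I"
  have "\<theta> k z \<le> (\<Sum>k\<in>I. \<theta> k z)" using finI k \<theta>nn by (intro member_le_sum) auto
  then show ?thesis using \<theta>le[of z] by linarith
qed

definition "aa k = (\<integral>w. \<theta> k w \<partial>\<nu>)"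
definition "bb k = (\<integral>z. \<theta> k z \<partial>\<mu>)"
definition "cc k = min (aa k) (bb k)"

lemma int\<theta>\<mu>: "k \<in> I \<Longrightarrow> integrable \<mu> (\<theta> k)"
  by (rule integrable_bdd[OF \<mu>p \<mu>s, where B=1]) (use \<theta>nn \<theta>le1 in auto)
lemma int\<theta>\<nu>: "k \<in> I \<Longrightarrow> integrable \<nu> (\<theta> k)"
  by (rule integrable_bdd[OF \<nu>p \<nu>s, where B=1]) (use \<theta>nn \<theta>le1 in auto)

lemma aa_nn: assumes "k \<in> I" shows "0 \<le> aa k" unfolding aa_def by (rule Bochner_Integration.integral_nonneg) (use \<theta>nn assms in auto)
lemma bb_nn: assumes "k \<in> I" shows "0 \<le> bb k" unfolding bb_def by (rule Bochner_Integration.integral_nonneg) (use \<theta>nn assms in auto)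
lemma cc_nn: "k \<in> I \<Longrightarrow> 0 \<le> cc k" unfolding cc_def using aa_nn bb_nn by auto

lemma cc_a: "k \<in> I \<Longrightarrow> cc k / aa k * aa k = cc k"
  using aa_nn[of k] cc_nn[of k] unfolding cc_def by (cases "aa k = 0") auto
lemma cc_b: "k \<in> I \<Longrightarrow> cc k / bb k * bb k = cc k"
  using bb_nn[of k] cc_nn[of k] unfolding cc_def by (cases "bb k = 0") auto
lemma cc_ab: "k \<in> I \<Longrightarrow> cc k / (aa k * bb k) * aa k = cc k / bb k"
  using aa_nn[of k] cc_nn[of k] unfolding cc_def by (cases "aa k = 0") auto
lemma cc_ab': "k \<in> I \<Longrightarrow> cc k / (aa k * bb k) * bb k = cc k / aa k"
  using bb_nn[of k] cc_nn[of k] unfolding cc_def by (cases "bb k = 0") auto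
lemma cc_b_le: "k \<in> I \<Longrightarrow> cc k / bb k \<le> 1"
  using bb_nn[of k] cc_nn[of k] unfolding cc_def by (cases "bb k = 0") auto
lemma cc_a_le: "k \<in> I \<Longrightarrow> cc k / aa k \<le> 1"
  using aa_nn[of k] cc_nn[of k] unfolding cc_def by (cases "aa k = 0") auto

definition "w\<mu> z = (\<Sum>k\<in>I. \<theta> k z * (cc k / bb k))"
definition "w\<nu> w = (\<Sum>k\<in>I. \<theta> k w * (cc k / aa k))"
definition "rr = 1 - (\<Sum>k\<in>I. cc k)"

lemma w\<mu>_nn: "0 \<le> w\<mu> z" unfolding w\<mu>_def using \<theta>nn cc_nn bb_nn by (intro sum_nonneg mult_nonneg_nonneg) auto
lemma w\<nu>_nn: "0 \<le> w\<nu> z" unfolding w\<nu>_def using \<theta>nn cc_nn aa_nn by (intro sum_nonneg mult_nonneg_nonneg) auto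
lemma w\<mu>_le: "w\<mu> z \<le> 1"
proof -
  have "w\<mu> z \<le> (\<Sum>k\<in>I. \<theta> k z)" unfolding w\<mu>_def
  proof (intro sum_mono)
    fix k assume k: "k \<in> I"
    show "\<theta> k z * (cc k / bb k) \<le> \<theta> k z" using mult_left_le[OF cc_b_le[OF k] \<theta>nn[OF k]] .
  qed
  then show ?thesis using \<theta>le[of z] by linarith
qed
lemma w\<nu>_le: "w\<nu> z \<le> 1"
proof -
  have "w\<nu> z \<le> (\<Sum>k\<in>I. \<theta> k z)" unfolding w\<nu>_def
  proof (intro sum_mono)
    fix k assume k: "k \<in> I"
    show "\<theta> k z * (cc k / aa k) \<le> \<theta> k z" using mult_left_le[OF cc_a_le[OF k] \<theta>nn[OF k]] .
  qed
  then show ?thesis using \<theta>le[of z] by linarith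
qed

lemma w\<mu>_m[measurable]: "w\<mu> \<in> borel_measurable borel" unfolding w\<mu>_def by measurable
lemma w\<nu>_m[measurable]: "w\<nu> \<in> borel_measurable borel" unfolding w\<nu>_def by measurable

lemma int_w\<mu>: "(\<integral>z. w\<mu> z \<partial>\<mu>) = (\<Sum>k\<in>I. cc k)"
proof -
  have "(\<integral>z. w\<mu> z \<partial>\<mu>) = (\<Sum>k\<in>I. (\<integral>z. \<theta> k z * (cc k / bb k) \<partial>\<mu>))"
    unfolding w\<mu>_def by (rule Bochner_Integration.integral_sum) (use int\<theta>\<mu> in auto)
  also have "\<dots> = (\<Sum>k\<in>I. cc k)"
  proof (intro sum.cong refl)
    fix k assume k: "k \<in> I"
    have "(\<integral>z. \<theta> k z * (cc k / bb k) \<partial>\<mu>) = bb k * (cc k / bb k)" unfolding bb_def by simp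
    also have "\<dots> = cc k" using cc_b[OF k] by (simp add: mult.commute)
    finally show "(\<integral>z. \<theta> k z * (cc k / bb k) \<partial>\<mu>) = cc k" .
  qed
  finally show ?thesis .
qed

lemma int_w\<nu>: "(\<integral>z. w\<nu> z \<partial>\<nu>) = (\<Sum>k\<in>I. cc k)"
proof -
  have "(\<integral>z. w\<nu> z \<partial>\<nu>) = (\<Sum>k\<in>I. (\<integral>z. \<theta> k z * (cc k / aa k) \<partial>\<nu>))"
    unfolding w\<nu>_def by (rule Bochner_Integration.integral_sum) (use int\<theta>\<nu> in auto)
  also have "\<dots> = (\<Sum>k\<in>I. cc k)"
  proof (intro sum.cong refl)
    fix k assume k: "k \<in> I"
    have "(\<integral>z. \<theta> k z * (cc k / aa k) \<partial>\<nu>) = aa k * (cc k / aa k)" unfolding aa_def by simp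
    also have "\<dots> = cc k" using cc_a[OF k] by (simp add: mult.commute)
    finally show "(\<integral>z. \<theta> k z * (cc k / aa k) \<partial>\<nu>) = cc k" .
  qed
  finally show ?thesis .
qed

lemma int_\<rho>\<mu>: "(\<integral>z. 1 - w\<mu> z \<partial>\<mu>) = rr"
proof -
  interpret prob_space \<mu> by (rule \<mu>p)
  have "integrable \<mu> w\<mu>" by (rule integrable_bdd[OF \<mu>p \<mu>s, where B=1]) (use w\<mu>_nn w\<mu>_le in auto)
  then show ?thesis unfolding rr_def using int_w\<mu> by (simp add: prob_space)
qed

lemma int_\<rho>\<nu>: "(\<integral>z. 1 - w\<nu> z \<partial>\<nu>) = rr"
proof -
  interpret prob_space \<nu> by (rule \<nu>p)
  have "integrable \<nu> w\<nu>" by (rule integrable_bdd[OF \<nu>p \<nu>s, where B=1]) (use w\<nu>_nn w\<nu>_le in auto)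
  then show ?thesis unfolding rr_def using int_w\<nu> by (simp add: prob_space)
qed


lemma rr_nn: "0 \<le> rr"
  unfolding int_\<rho>\<mu>[symmetric] by (rule Bochner_Integration.integral_nonneg) (use w\<mu>_le in auto)

definition "CC k = cc k / (aa k * bb k)"
lemma CC_nn: "k \<in> I \<Longrightarrow> 0 \<le> CC k" unfolding CC_def using cc_nn aa_nn bb_nn by simp

definition "Fc x = (\<Sum>k\<in>I. \<theta> k (fst x) * \<theta> k (snd x) * CC k) + (1 - w\<mu> (fst x)) * (1 - w\<nu> (snd x)) / rr"

lemma Fc_m[measurable]: "Fc \<in> borel_measurable (borel \<Otimes>\<^sub>M borel)"
  unfolding Fc_def by measurable

lemma Fc_nn: "0 \<le> Fc x"
  unfolding Fc_def using \<theta>nn CC_nn w\<mu>_le w\<nu>_le rr_nn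
  by (intro add_nonneg_nonneg sum_nonneg mult_nonneg_nonneg divide_nonneg_nonneg) auto

definition "Bc = (\<Sum>k\<in>I. CC k) + 1 / rr"

lemma Fc_le: "Fc x \<le> Bc"
proof -
  have "(\<Sum>k\<in>I. \<theta> k (fst x) * \<theta> k (snd x) * CC k) \<le> (\<Sum>k\<in>I. CC k)"
  proof (rule sum_mono)
    fix k assume k: "k \<in> I"
    have "\<theta> k (fst x) * \<theta> k (snd x) \<le> 1 * 1"
      using \<theta>nn[OF k] \<theta>le1[OF k] by (intro mult_mono) auto
    then show "\<theta> k (fst x) * \<theta> k (snd x) * CC k \<le> CC k"
      using CC_nn[OF k] mult_right_mono[of _ 1 "CC k"] by simp
  qed
  moreover have "(1 - w\<mu> (fst x)) * (1 - w\<nu> (snd x)) / rr \<le> 1 / rr"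
  proof (rule divide_right_mono[OF _ rr_nn])
    show "(1 - w\<mu> (fst x)) * (1 - w\<nu> (snd x)) \<le> 1"
      using w\<mu>_nn[of "fst x"] w\<nu>_nn[of "snd x"] w\<mu>_le[of "fst x"] w\<nu>_le[of "snd x"]
      by (smt (verit) mult_left_le mult_nonneg_nonneg)
  qed
  ultimately show ?thesis unfolding Fc_def Bc_def by linarith
qed

lemma Fc_int1: "integrable \<nu> (\<lambda>w. Fc (z, w))"
  by (rule integrable_bdd[OF \<nu>p \<nu>s, where B=Bc]) (use Fc_nn Fc_le in \<open>auto simp: abs_of_nonneg\<close>)
lemma Fc_int2: "integrable \<mu> (\<lambda>z. Fc (z, w))"
  by (rule integrable_bdd[OF \<mu>p \<mu>s, where B=Bc]) (use Fc_nn Fc_le in \<open>auto simp: abs_of_nonneg\<close>)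

lemma inner1: "(\<integral>w. Fc (z, w) \<partial>\<nu>) = w\<mu> z + (1 - w\<mu> z) * (rr / rr)"
proof -
  have i1: "integrable \<nu> (\<lambda>w. \<theta> k z * \<theta> k w * CC k)" if "k \<in> I" for k
    using int\<theta>\<nu>[OF that] by (intro integrable_mult_left integrable_mult_right)
  have i2: "integrable \<nu> (\<lambda>w. (1 - w\<mu> z) * (1 - w\<nu> w) / rr)"
    by (rule integrable_bdd[OF \<nu>p \<nu>s, where B="1 / rr"])
       (use w\<mu>_nn w\<nu>_nn w\<mu>_le w\<nu>_le rr_nn in \<open>auto simp: abs_mult intro!: divide_right_mono mult_le_one\<close>)
  have i3: "integrable \<nu> (\<lambda>w. 1 - w\<nu> w)"
    by (rule integrable_bdd[OF \<nu>p \<nu>s, where B=1]) (use w\<nu>_nn w\<nu>_le in auto)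
  have "(\<integral>w. Fc (z, w) \<partial>\<nu>) = (\<integral>w. (\<Sum>k\<in>I. \<theta> k z * \<theta> k w * CC k) \<partial>\<nu>) + (\<integral>w. (1 - w\<mu> z) * (1 - w\<nu> w) / rr \<partial>\<nu>)"
    unfolding Fc_def fst_conv snd_conv
    by (rule Bochner_Integration.integral_add[OF Bochner_Integration.integrable_sum i2]) (use i1 in auto)
  also have "(\<integral>w. (\<Sum>k\<in>I. \<theta> k z * \<theta> k w * CC k) \<partial>\<nu>) = (\<Sum>k\<in>I. (\<integral>w. \<theta> k z * \<theta> k w * CC k \<partial>\<nu>))"
    by (rule Bochner_Integration.integral_sum) (use i1 in auto)
  also have "\<dots> = (\<Sum>k\<in>I. \<theta> k z * (cc k / bb k))"
  proof (rule sum.cong[OF refl])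
    fix k assume k: "k \<in> I"
    have "(\<integral>w. \<theta> k z * \<theta> k w * CC k \<partial>\<nu>) = \<theta> k z * (CC k * aa k)" unfolding aa_def by simp
    also have "\<dots> = \<theta> k z * (cc k / bb k)" unfolding CC_def using cc_ab[OF k] by simp
    finally show "(\<integral>w. \<theta> k z * \<theta> k w * CC k \<partial>\<nu>) = \<theta> k z * (cc k / bb k)" .
  qed
  also have "(\<integral>w. (1 - w\<mu> z) * (1 - w\<nu> w) / rr \<partial>\<nu>) = (1 - w\<mu> z) * (\<integral>w. 1 - w\<nu> w \<partial>\<nu>) / rr"
    by simp
  finally show ?thesis unfolding int_\<rho>\<nu> w\<mu>_def by simp
qed

lemma inner2: "(\<integral>z. Fc (z, w) \<partial>\<mu>) = w\<nu> w + (1 - w\<nu> w) * (rr / rr)"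
proof -
  have i1: "integrable \<mu> (\<lambda>z. \<theta> k z * \<theta> k w * CC k)" if "k \<in> I" for k
    using int\<theta>\<mu>[OF that] by (intro integrable_mult_left)
  have i2: "integrable \<mu> (\<lambda>z. (1 - w\<mu> z) * (1 - w\<nu> w) / rr)"
    by (rule integrable_bdd[OF \<mu>p \<mu>s, where B="1 / rr"])
       (use w\<mu>_nn w\<nu>_nn w\<mu>_le w\<nu>_le rr_nn in \<open>auto simp: abs_mult intro!: divide_right_mono mult_le_one\<close>)
  have "(\<integral>z. Fc (z, w) \<partial>\<mu>) = (\<integral>z. (\<Sum>k\<in>I. \<theta> k z * \<theta> k w * CC k) \<partial>\<mu>) + (\<integral>z. (1 - w\<mu> z) * (1 - w\<nu> w) / rr \<partial>\<mu>)"
    unfolding Fc_def fst_conv snd_conv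
    by (rule Bochner_Integration.integral_add[OF Bochner_Integration.integrable_sum i2]) (use i1 in auto)
  also have "(\<integral>z. (\<Sum>k\<in>I. \<theta> k z * \<theta> k w * CC k) \<partial>\<mu>) = (\<Sum>k\<in>I. (\<integral>z. \<theta> k z * \<theta> k w * CC k \<partial>\<mu>))"
    by (rule Bochner_Integration.integral_sum) (use i1 in auto)
  also have "\<dots> = (\<Sum>k\<in>I. \<theta> k w * (cc k / aa k))"
  proof (rule sum.cong[OF refl])
    fix k assume k: "k \<in> I"
    have "(\<integral>z. \<theta> k z * \<theta> k w * CC k \<partial>\<mu>) = \<theta> k w * (CC k * bb k)" unfolding bb_def by simp
    also have "\<dots> = \<theta> k w * (cc k / aa k)" unfolding CC_def using cc_ab'[OF k] by simp
    finally show "(\<integral>z. \<theta> k z * \<theta> k w * CC k \<partial>\<mu>) = \<theta> k w * (cc k / aa k)" .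
  qed
  also have "(\<integral>z. (1 - w\<mu> z) * (1 - w\<nu> w) / rr \<partial>\<mu>) = (\<integral>z. 1 - w\<mu> z \<partial>\<mu>) * (1 - w\<nu> w) / rr"
    by simp
  finally show ?thesis unfolding int_\<rho>\<mu> w\<nu>_def by (simp add: mult.commute)
qed

lemma AE_inner1: "AE z in \<mu>. (\<integral>w. Fc (z, w) \<partial>\<nu>) = 1"
proof (cases "rr = 0")
  case False then show ?thesis unfolding inner1 by simp
next
  case True
  have "integrable \<mu> (\<lambda>z. 1 - w\<mu> z)"
    by (rule integrable_bdd[OF \<mu>p \<mu>s, where B=1]) (use w\<mu>_nn w\<mu>_le in auto)
  then have "AE z in \<mu>. 1 - w\<mu> z = 0"
    using integral_nonneg_eq_0_iff_AE[of \<mu> "\<lambda>z. 1 - w\<mu> z"] int_\<rho>\<mu> True w\<mu>_le by auto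
  then show ?thesis unfolding inner1 by eventually_elim auto
qed

lemma AE_inner2: "AE w in \<nu>. (\<integral>z. Fc (z, w) \<partial>\<mu>) = 1"
proof (cases "rr = 0")
  case False then show ?thesis unfolding inner2 by simp
next
  case True
  have "integrable \<nu> (\<lambda>z. 1 - w\<nu> z)"
    by (rule integrable_bdd[OF \<nu>p \<nu>s, where B=1]) (use w\<nu>_nn w\<nu>_le in auto)
  then have "AE z in \<nu>. 1 - w\<nu> z = 0"
    using integral_nonneg_eq_0_iff_AE[of \<nu> "\<lambda>z. 1 - w\<nu> z"] int_\<rho>\<nu> True w\<nu>_le by auto
  then show ?thesis unfolding inner2 by eventually_elim auto
qed


definition "G1 x = (\<Sum>k\<in>I. \<theta> k (fst x) * \<theta> k (snd x) * CC k)"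
definition "G2 x = (1 - w\<mu> (fst x)) * (1 - w\<nu> (snd x)) / rr"

lemma Fc_G: "Fc x = G1 x + G2 x" unfolding Fc_def G1_def G2_def ..
lemma G1_m[measurable]: "G1 \<in> borel_measurable (borel \<Otimes>\<^sub>M borel)" unfolding G1_def by measurable
lemma G2_m[measurable]: "G2 \<in> borel_measurable (borel \<Otimes>\<^sub>M borel)" unfolding G2_def by measurable
lemma G1_nn: "0 \<le> G1 x" unfolding G1_def using \<theta>nn CC_nn by (intro sum_nonneg mult_nonneg_nonneg) auto
lemma G2_nn: "0 \<le> G2 x" unfolding G2_def using w\<mu>_le w\<nu>_le rr_nn by (intro mult_nonneg_nonneg divide_nonneg_nonneg) auto
lemma G1_le: "G1 x \<le> Bc" using Fc_le[of x] G2_nn[of x] Fc_G[of x] by linarith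
lemma G2_le: "G2 x \<le> Bc" using Fc_le[of x] G1_nn[of x] Fc_G[of x] by linarith

lemma G1_inner: "(\<integral>w. G1 (z, w) \<partial>\<nu>) = w\<mu> z"
proof -
  have i1: "integrable \<nu> (\<lambda>w. \<theta> k z * \<theta> k w * CC k)" if "k \<in> I" for k
    using int\<theta>\<nu>[OF that] by (intro integrable_mult_left integrable_mult_right)
  have "(\<integral>w. G1 (z, w) \<partial>\<nu>) = (\<Sum>k\<in>I. (\<integral>w. \<theta> k z * \<theta> k w * CC k \<partial>\<nu>))"
    unfolding G1_def fst_conv snd_conv by (rule Bochner_Integration.integral_sum) (use i1 in auto)
  also have "\<dots> = (\<Sum>k\<in>I. \<theta> k z * (cc k / bb k))"
  proof (rule sum.cong[OF refl])
    fix k assume k: "k \<in> I"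
    have "(\<integral>w. \<theta> k z * \<theta> k w * CC k \<partial>\<nu>) = \<theta> k z * (CC k * aa k)" unfolding aa_def by simp
    also have "\<dots> = \<theta> k z * (cc k / bb k)" unfolding CC_def using cc_ab[OF k] by simp
    finally show "(\<integral>w. \<theta> k z * \<theta> k w * CC k \<partial>\<nu>) = \<theta> k z * (cc k / bb k)" .
  qed
  finally show ?thesis unfolding w\<mu>_def .
qed

lemma G2_inner: "(\<integral>w. G2 (z, w) \<partial>\<nu>) = (1 - w\<mu> z) * (rr / rr)"
proof -
  have "(\<integral>w. G2 (z, w) \<partial>\<nu>) = (1 - w\<mu> z) * (\<integral>w. 1 - w\<nu> w \<partial>\<nu>) / rr"
    unfolding G2_def by simp
  then show ?thesis unfolding int_\<rho>\<nu> by simp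
qed

lemma G_int1: "integrable \<nu> (\<lambda>w. a * G1 (z, w) + b * G2 (z, w))"
  by (rule integrable_bdd[OF \<nu>p \<nu>s, where B="\<bar>a\<bar> * Bc + \<bar>b\<bar> * Bc"])
     (use G1_nn G1_le G2_nn G2_le in \<open>auto intro!: abs_triangle_ineq[THEN order_trans] add_mono simp: abs_mult mult_left_mono\<close>)

definition "\<pi>\<pi> = density (\<mu> \<Otimes>\<^sub>M \<nu>) (\<lambda>x. ennreal (Fc x))"

lemma sets_\<pi>\<pi>: "sets \<pi>\<pi> = sets (borel \<Otimes>\<^sub>M borel)"
  unfolding \<pi>\<pi>_def by (simp add: sets_pair_measure_cong[OF \<mu>s \<nu>s])

lemma space_\<mu>: "space \<mu> = UNIV" using sets_eq_imp_space_eq[OF \<mu>s] by simp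
lemma space_\<nu>: "space \<nu> = UNIV" using sets_eq_imp_space_eq[OF \<nu>s] by simp

lemma marg1: "distr \<pi>\<pi> borel fst = \<mu>"
proof (rule measure_eqI)
  show "sets (distr \<pi>\<pi> borel fst) = sets \<mu>" using \<mu>s by simp
  interpret P: pair_sigma_finite \<mu> \<nu>
    unfolding pair_sigma_finite_def using \<mu>p \<nu>p by (simp add: prob_space_imp_sigma_finite)
  fix A assume "A \<in> sets (distr \<pi>\<pi> borel fst)"
  then have A[measurable]: "A \<in> sets borel" by simp
  have "emeasure (distr \<pi>\<pi> borel fst) A = emeasure \<pi>\<pi> (fst -` A \<inter> space \<pi>\<pi>)"
    by (rule emeasure_distr) (auto simp: measurable_cong_sets[OF sets_\<pi>\<pi> refl])
  also have "fst -` A \<inter> space \<pi>\<pi> = A \<times> UNIV"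
    by (auto simp: \<pi>\<pi>_def space_pair_measure space_\<mu> space_\<nu>)
  also have "emeasure \<pi>\<pi> (A \<times> UNIV) = (\<integral>\<^sup>+x. ennreal (Fc x) * indicator (A \<times> UNIV) x \<partial>(\<mu> \<Otimes>\<^sub>M \<nu>))"
    unfolding \<pi>\<pi>_def by (rule emeasure_density) auto
  also have "\<dots> = (\<integral>\<^sup>+z. \<integral>\<^sup>+w. ennreal (Fc (z, w)) * indicator (A \<times> UNIV) (z, w) \<partial>\<nu> \<partial>\<mu>)"
    by (rule P.M2.nn_integral_fst[symmetric]) auto
  also have "\<dots> = (\<integral>\<^sup>+z. indicator A z * (\<integral>\<^sup>+w. ennreal (Fc (z, w)) \<partial>\<nu>) \<partial>\<mu>)"
    by (intro nn_integral_cong) (auto simp: nn_integral_multc[symmetric] mult.commute split: split_indicator)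
  also have "\<dots> = (\<integral>\<^sup>+z. indicator A z \<partial>\<mu>)"
  proof (rule nn_integral_cong_AE)
    show "AE z in \<mu>. indicator A z * (\<integral>\<^sup>+w. ennreal (Fc (z, w)) \<partial>\<nu>) = indicator A z"
      using AE_inner1
    proof eventually_elim
      case (elim z)
      have "(\<integral>\<^sup>+w. ennreal (Fc (z, w)) \<partial>\<nu>) = ennreal (\<integral>w. Fc (z, w) \<partial>\<nu>)"
        by (rule nn_integral_eq_integral[OF Fc_int1]) (use Fc_nn in auto)
      then show ?case using elim by simp
    qed
  qed
  also have "\<dots> = emeasure \<mu> A" using A \<mu>s by simp
  finally show "emeasure (distr \<pi>\<pi> borel fst) A = emeasure \<mu> A" .
qed

lemma marg2: "distr \<pi>\<pi> borel snd = \<nu>"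
proof (rule measure_eqI)
  show "sets (distr \<pi>\<pi> borel snd) = sets \<nu>" using \<nu>s by simp
  interpret P: pair_sigma_finite \<mu> \<nu>
    unfolding pair_sigma_finite_def using \<mu>p \<nu>p by (simp add: prob_space_imp_sigma_finite)
  fix A assume "A \<in> sets (distr \<pi>\<pi> borel snd)"
  then have A[measurable]: "A \<in> sets borel" by simp
  have "emeasure (distr \<pi>\<pi> borel snd) A = emeasure \<pi>\<pi> (snd -` A \<inter> space \<pi>\<pi>)"
    by (rule emeasure_distr) (auto simp: measurable_cong_sets[OF sets_\<pi>\<pi> refl])
  also have "snd -` A \<inter> space \<pi>\<pi> = UNIV \<times> A"
    by (auto simp: \<pi>\<pi>_def space_pair_measure space_\<mu> space_\<nu>)
  also have "emeasure \<pi>\<pi> (UNIV \<times> A) = (\<integral>\<^sup>+x. ennreal (Fc x) * indicator (UNIV \<times> A) x \<partial>(\<mu> \<Otimes>\<^sub>M \<nu>))"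
    unfolding \<pi>\<pi>_def by (rule emeasure_density) auto
  also have "\<dots> = (\<integral>\<^sup>+w. \<integral>\<^sup>+z. ennreal (Fc (z, w)) * indicator (UNIV \<times> A) (z, w) \<partial>\<mu> \<partial>\<nu>)"
    by (rule P.nn_integral_snd[symmetric]) auto
  also have "\<dots> = (\<integral>\<^sup>+w. indicator A w * (\<integral>\<^sup>+z. ennreal (Fc (z, w)) \<partial>\<mu>) \<partial>\<nu>)"
    by (intro nn_integral_cong) (auto simp: nn_integral_multc[symmetric] mult.commute split: split_indicator)
  also have "\<dots> = (\<integral>\<^sup>+w. indicator A w \<partial>\<nu>)"
  proof (rule nn_integral_cong_AE)
    show "AE w in \<nu>. indicator A w * (\<integral>\<^sup>+z. ennreal (Fc (z, w)) \<partial>\<mu>) = indicator A w"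
      using AE_inner2
    proof eventually_elim
      case (elim w)
      have "(\<integral>\<^sup>+z. ennreal (Fc (z, w)) \<partial>\<mu>) = ennreal (\<integral>z. Fc (z, w) \<partial>\<mu>)"
        by (rule nn_integral_eq_integral[OF Fc_int2]) (use Fc_nn in auto)
      then show ?case using elim by simp
    qed
  qed
  also have "\<dots> = emeasure \<nu> A" using A \<nu>s by simp
  finally show "emeasure (distr \<pi>\<pi> borel snd) A = emeasure \<nu> A" .
qed

lemma \<pi>\<pi>_coupling: "\<pi>\<pi> \<in> couplings \<mu> \<nu>"
  unfolding couplings_def using sets_\<pi>\<pi> marg1 marg2 by auto


lemma sum_aa: assumes "AE w in \<nu>. (\<Sum>k\<in>I. \<theta> k w) = 1" shows "(\<Sum>k\<in>I. aa k) = 1"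
proof -
  interpret prob_space \<nu> by (rule \<nu>p)
  have "(\<Sum>k\<in>I. aa k) = (\<integral>w. (\<Sum>k\<in>I. \<theta> k w) \<partial>\<nu>)"
    unfolding aa_def by (rule Bochner_Integration.integral_sum[symmetric]) (use int\<theta>\<nu> in auto)
  also have "\<dots> = (\<integral>w. 1 \<partial>\<nu>)" by (rule integral_cong_AE) (use assms in auto)
  also have "\<dots> = 1" by (simp add: prob_space)
  finally show ?thesis .
qed

lemma rr_le: assumes "AE w in \<nu>. (\<Sum>k\<in>I. \<theta> k w) = 1" shows "rr \<le> (\<Sum>k\<in>I. \<bar>aa k - bb k\<bar>)"
proof -
  have "rr = (\<Sum>k\<in>I. aa k - cc k)" unfolding rr_def sum_aa[OF assms, symmetric] by (simp add: sum_subtractf)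
  also have "\<dots> \<le> (\<Sum>k\<in>I. \<bar>aa k - bb k\<bar>)" by (intro sum_mono) (auto simp: cc_def)
  finally show ?thesis .
qed

lemma sum_cc_le: "(\<Sum>k\<in>I. cc k) \<le> 1" using rr_nn unfolding rr_def by simp

lemma cost_bound:
  fixes S :: "'a set" and p \<delta> D :: real
  assumes p: "0 < p" and \<delta>: "0 \<le> \<delta>" and D: "0 \<le> D"
    and diam: "\<And>k z w. k \<in> I \<Longrightarrow> 0 < \<theta> k z \<Longrightarrow> 0 < \<theta> k w \<Longrightarrow> dist z w \<le> \<delta>"
    and Sm[measurable]: "S \<in> sets borel" and S\<mu>: "AE z in \<mu>. z \<in> S" and S\<nu>: "AE w in \<nu>. w \<in> S"
    and SD: "\<And>z w. z \<in> S \<Longrightarrow> w \<in> S \<Longrightarrow> dist z w \<le> D"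
    and sum1: "AE w in \<nu>. (\<Sum>k\<in>I. \<theta> k w) = 1"
  shows "transport_cost p \<mu> \<nu> \<le> ennreal (\<delta> powr p + D powr p * (\<Sum>k\<in>I. \<bar>aa k - bb k\<bar>))"
proof -
  interpret P: pair_sigma_finite \<mu> \<nu>
    unfolding pair_sigma_finite_def using \<mu>p \<nu>p by (simp add: prob_space_imp_sigma_finite)
  interpret M: prob_space \<mu> by (rule \<mu>p)
  define G where "G x = \<delta> powr p * G1 x + D powr p * G2 x" for x
  have Gm[measurable]: "G \<in> borel_measurable (borel \<Otimes>\<^sub>M borel)" unfolding G_def by measurable
  have dm[measurable]: "(\<lambda>x::'a\<times>'a. dist (fst x) (snd x) powr p) \<in> borel_measurable (borel \<Otimes>\<^sub>M borel)"
    by measurable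
  have "transport_cost p \<mu> \<nu> \<le> (\<integral>\<^sup>+z. ennreal (dist (fst z) (snd z) powr p) \<partial>\<pi>\<pi>)"
    unfolding transport_cost_def by (rule INF_lower[OF \<pi>\<pi>_coupling])
  also have "\<dots> = (\<integral>\<^sup>+x. ennreal (Fc x) * ennreal (dist (fst x) (snd x) powr p) \<partial>(\<mu> \<Otimes>\<^sub>M \<nu>))"
    unfolding \<pi>\<pi>_def by (rule nn_integral_density) auto
  also have "\<dots> \<le> (\<integral>\<^sup>+x. ennreal (G x) \<partial>(\<mu> \<Otimes>\<^sub>M \<nu>))"
  proof (rule nn_integral_mono_AE)
    have "AE x in \<mu> \<Otimes>\<^sub>M \<nu>. fst x \<in> S \<and> snd x \<in> S"
    proof (rule P.AE_pair_measure)
      show "{x \<in> space (\<mu> \<Otimes>\<^sub>M \<nu>). fst x \<in> S \<and> snd x \<in> S} \<in> sets (\<mu> \<Otimes>\<^sub>M \<nu>)" by measurable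
      show "AE x in \<mu>. AE y in \<nu>. fst (x, y) \<in> S \<and> snd (x, y) \<in> S"
        using S\<mu> by eventually_elim (use S\<nu> in auto)
    qed
    then show "AE x in \<mu> \<Otimes>\<^sub>M \<nu>. ennreal (Fc x) * ennreal (dist (fst x) (snd x) powr p) \<le> ennreal (G x)"
    proof eventually_elim
      case (elim x)
      define d where "d = dist (fst x) (snd x)"
      have d0: "0 \<le> d" unfolding d_def by simp
      have dD: "d \<le> D" unfolding d_def using SD elim by auto
      have t1: "G1 x * d powr p \<le> G1 x * \<delta> powr p"
      proof -
        have "G1 x * d powr p = (\<Sum>k\<in>I. \<theta> k (fst x) * \<theta> k (snd x) * CC k * d powr p)"
          unfolding G1_def by (simp add: sum_distrib_right)
        also have "\<dots> \<le> (\<Sum>k\<in>I. \<theta> k (fst x) * \<theta> k (snd x) * CC k * \<delta> powr p)"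
        proof (rule sum_mono)
          fix k assume k: "k \<in> I"
          have nn: "0 \<le> \<theta> k (fst x) * \<theta> k (snd x) * CC k" using \<theta>nn[OF k] CC_nn[OF k] by simp
          show "\<theta> k (fst x) * \<theta> k (snd x) * CC k * d powr p \<le> \<theta> k (fst x) * \<theta> k (snd x) * CC k * \<delta> powr p"
          proof (cases "0 < \<theta> k (fst x) \<and> 0 < \<theta> k (snd x)")
            case True
            then have "d \<le> \<delta>" unfolding d_def using diam[OF k] by auto
            then have "d powr p \<le> \<delta> powr p" using d0 p by (intro powr_mono2) auto
            then show ?thesis using nn by (intro mult_left_mono) auto
          next
            case False
            then have "\<theta> k (fst x) = 0 \<or> \<theta> k (snd x) = 0" using \<theta>nn[OF k] by (auto simp: less_le)
            then show ?thesis by auto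
          qed
        qed
        also have "\<dots> = G1 x * \<delta> powr p" unfolding G1_def by (simp add: sum_distrib_right)
        finally show ?thesis .
      qed
      have t2: "G2 x * d powr p \<le> G2 x * D powr p"
        using G2_nn[of x] dD d0 p by (intro mult_left_mono powr_mono2) auto
      have "ennreal (Fc x) * ennreal (d powr p) = ennreal (Fc x * d powr p)"
        using Fc_nn by (simp add: ennreal_mult)
      also have "Fc x * d powr p \<le> G x" unfolding Fc_G G_def using t1 t2 by (simp add: algebra_simps)
      finally show ?case unfolding d_def by (simp add: ennreal_leI)
    qed
  qed
  also have "\<dots> = (\<integral>\<^sup>+z. \<integral>\<^sup>+w. ennreal (G (z, w)) \<partial>\<nu> \<partial>\<mu>)"
    by (rule P.M2.nn_integral_fst[symmetric]) auto
  also have "\<dots> = (\<integral>\<^sup>+z. ennreal (\<delta> powr p * w\<mu> z + D powr p * ((1 - w\<mu> z) * (rr / rr))) \<partial>\<mu>)"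
  proof (rule nn_integral_cong)
    fix z
    have "(\<integral>\<^sup>+w. ennreal (G (z, w)) \<partial>\<nu>) = ennreal (\<integral>w. G (z, w) \<partial>\<nu>)"
      unfolding G_def by (rule nn_integral_eq_integral[OF G_int1]) (use G1_nn G2_nn in auto)
    also have "(\<integral>w. G (z, w) \<partial>\<nu>) = \<delta> powr p * (\<integral>w. G1 (z, w) \<partial>\<nu>) + D powr p * (\<integral>w. G2 (z, w) \<partial>\<nu>)"
      unfolding G_def using G_int1[of 1 z 0] G_int1[of 0 z 1] by simp
    finally show "(\<integral>\<^sup>+w. ennreal (G (z, w)) \<partial>\<nu>) = ennreal (\<delta> powr p * w\<mu> z + D powr p * ((1 - w\<mu> z) * (rr / rr)))"
      unfolding G1_inner G2_inner .
  qed
  also have "\<dots> = ennreal (\<integral>z. \<delta> powr p * w\<mu> z + D powr p * ((1 - w\<mu> z) * (rr / rr)) \<partial>\<mu>)"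
  proof (rule nn_integral_eq_integral)
    show "integrable \<mu> (\<lambda>z. \<delta> powr p * w\<mu> z + D powr p * ((1 - w\<mu> z) * (rr / rr)))"
    proof (rule integrable_bdd[OF \<mu>p \<mu>s, where B="\<delta> powr p + D powr p"])
      fix z
      have q: "0 \<le> (1 - w\<mu> z) * (rr / rr)" "(1 - w\<mu> z) * (rr / rr) \<le> 1"
        using w\<mu>_nn[of z] w\<mu>_le[of z] by (cases "rr = 0"; simp)+
      have a1: "\<delta> powr p * w\<mu> z \<le> \<delta> powr p" using mult_left_le[OF w\<mu>_le[of z], of "\<delta> powr p"] by simp
      have a2: "D powr p * ((1 - w\<mu> z) * (rr / rr)) \<le> D powr p" using mult_left_le[OF q(2), of "D powr p"] by simp
      have a3: "0 \<le> \<delta> powr p * w\<mu> z + D powr p * ((1 - w\<mu> z) * (rr / rr))"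
        using w\<mu>_nn[of z] q by simp
      show "\<bar>\<delta> powr p * w\<mu> z + D powr p * ((1 - w\<mu> z) * (rr / rr))\<bar> \<le> \<delta> powr p + D powr p"
        using a1 a2 a3 by linarith
    qed simp
    show "AE z in \<mu>. 0 \<le> \<delta> powr p * w\<mu> z + D powr p * ((1 - w\<mu> z) * (rr / rr))"
      using w\<mu>_nn w\<mu>_le by (auto intro!: add_nonneg_nonneg mult_nonneg_nonneg)
  qed
  also have "(\<integral>z. \<delta> powr p * w\<mu> z + D powr p * ((1 - w\<mu> z) * (rr / rr)) \<partial>\<mu>)
      = \<delta> powr p * (\<Sum>k\<in>I. cc k) + D powr p * (rr * (rr / rr))"
  proof -
    have i1: "integrable \<mu> w\<mu>" by (rule integrable_bdd[OF \<mu>p \<mu>s, where B=1]) (use w\<mu>_nn w\<mu>_le in auto)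
    have i2: "integrable \<mu> (\<lambda>z. 1 - w\<mu> z)" using i1 by simp
    have "(\<integral>z. \<delta> powr p * w\<mu> z + D powr p * ((1 - w\<mu> z) * (rr / rr)) \<partial>\<mu>)
        = \<delta> powr p * (\<integral>z. w\<mu> z \<partial>\<mu>) + D powr p * ((\<integral>z. 1 - w\<mu> z \<partial>\<mu>) * (rr / rr))"
      using i1 i2 by simp
    then show ?thesis unfolding int_w\<mu> int_\<rho>\<mu> .
  qed
  also have "\<dots> \<le> \<delta> powr p + D powr p * (\<Sum>k\<in>I. \<bar>aa k - bb k\<bar>)"
  proof (rule add_mono)
    show "\<delta> powr p * (\<Sum>k\<in>I. cc k) \<le> \<delta> powr p" using sum_cc_le mult_left_le[of _ "\<delta> powr p"] cc_nn
      by (simp add: sum_nonneg)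
    have "rr * (rr / rr) \<le> rr" using rr_nn by (cases "rr = 0") auto
    also have "\<dots> \<le> (\<Sum>k\<in>I. \<bar>aa k - bb k\<bar>)" by (rule rr_le[OF sum1])
    finally show "D powr p * (rr * (rr / rr)) \<le> D powr p * (\<Sum>k\<in>I. \<bar>aa k - bb k\<bar>)"
      by (intro mult_left_mono) auto
  qed
  finally show ?thesis by (simp add: ennreal_leI)
qed


lemma cost_bound':
  fixes S :: "'a set" and p \<delta> D :: real
  assumes "0 < p" "0 \<le> \<delta>" "0 \<le> D"
    "\<And>k z w. k \<in> I \<Longrightarrow> 0 < \<theta> k z \<Longrightarrow> 0 < \<theta> k w \<Longrightarrow> dist z w \<le> \<delta>"
    "S \<in> sets borel" "AE z in \<mu>. z \<in> S" "AE w in \<nu>. w \<in> S"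
    "\<And>z w. z \<in> S \<Longrightarrow> w \<in> S \<Longrightarrow> dist z w \<le> D"
    "AE w in \<nu>. (\<Sum>k\<in>I. \<theta> k w) = 1"
  shows "transport_cost p \<mu> \<nu> \<le> ennreal (\<delta> powr p + D powr p * (\<Sum>k\<in>I. \<bar>(\<integral>w. \<theta> k w \<partial>\<nu>) - (\<integral>z. \<theta> k z \<partial>\<mu>)\<bar>))"
  using cost_bound[OF assms] unfolding aa_def bb_def .

end


definition pou :: "'a::metric_space set \<Rightarrow> real \<Rightarrow> 'a \<Rightarrow> 'a \<Rightarrow> real" where
  "pou C r c z = max 0 (r - dist z c) / (\<Sum>c'\<in>C. max 0 (r - dist z c'))"

lemma pou_nn: "0 \<le> pou C r c z"
  unfolding pou_def by (intro divide_nonneg_nonneg sum_nonneg) auto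

lemma pou_sum: "finite C \<Longrightarrow> (\<Sum>c\<in>C. pou C r c z) = (if (\<Sum>c'\<in>C. max 0 (r - dist z c')) = 0 then 0 else 1)"
  unfolding pou_def by (simp add: sum_divide_distrib[symmetric])

lemma pou_sum_le: assumes "finite C" shows "(\<Sum>c\<in>C. pou C r c z) \<le> 1"
  using pou_sum[OF assms] by simp

lemma pou_den_pos: assumes "finite C" "c \<in> C" "z \<in> ball c r"
  shows "(\<Sum>c'\<in>C. max 0 (r - dist z c')) > 0"
proof -
  have "0 < max 0 (r - dist z c)" using assms(3) by (simp add: dist_commute)
  also have "\<dots> \<le> (\<Sum>c'\<in>C. max 0 (r - dist z c'))"
    using assms(1,2) by (intro member_le_sum) auto
  finally show ?thesis .
qed

lemma pou_sum_eq: assumes "finite C" "z \<in> (\<Union>c\<in>C. ball c r)"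
  shows "(\<Sum>c\<in>C. pou C r c z) = 1"
proof -
  obtain c where c: "c \<in> C" "z \<in> ball c r" using assms(2) by blast
  have "(\<Sum>c'\<in>C. max 0 (r - dist z c')) > 0" by (rule pou_den_pos[OF assms(1) c])
  then show ?thesis unfolding pou_sum[OF assms(1)] by simp
qed

lemma pou_pos: assumes "0 < pou C r c z" shows "dist z c < r"
proof (rule ccontr)
  assume "\<not> dist z c < r"
  then have "max 0 (r - dist z c) = 0" by simp
  then have "pou C r c z = 0" unfolding pou_def by simp
  then show False using assms by simp
qed

lemma pou_meas[measurable]: "pou C r c \<in> borel_measurable borel"
proof -
  have "(\<lambda>z. max 0 (r - dist z c)) \<in> borel_measurable borel"
    by (intro borel_measurable_continuous_onI continuous_intros)
  moreover have "(\<lambda>z. \<Sum>c'\<in>C. max 0 (r - dist z c')) \<in> borel_measurable borel"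
    by (intro borel_measurable_continuous_onI continuous_intros)
  ultimately show ?thesis unfolding pou_def by (rule borel_measurable_divide)
qed

lemma pou_cont:
  fixes f :: "'b::topological_space \<Rightarrow> 'a::metric_space"
  assumes "finite C" "continuous_on A f" "f ` A \<subseteq> (\<Union>c\<in>C. ball c r)"
  shows "continuous_on A (\<lambda>x. pou C r c (f x))"
  unfolding pou_def
proof (intro continuous_on_divide continuous_intros assms(2) ballI)
  fix x assume "x \<in> A"
  then show "(\<Sum>c'\<in>C. max 0 (r - dist (f x) c')) \<noteq> 0"
    using pou_den_pos[OF assms(1)] assms(3) by force
qed

lemma finite_cover:
  fixes K :: "'a::metric_space set"
  assumes "compact K" "r > 0"
  obtains C where "finite C" "C \<subseteq> K" "K \<subseteq> (\<Union>c\<in>C. ball c r)"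
proof -
  have cov: "K \<subseteq> (\<Union>c\<in>K. ball c r)" using assms(2) by auto
  obtain C where "C \<subseteq> K" "finite C" "K \<subseteq> (\<Union>c\<in>C. ball c r)"
    by (rule compactE_image[OF assms(1) _ cov]) simp_all
  then show ?thesis using that by blast
qed


lemma emp_meas: "(\<lambda>j. (xs j, g (xs j))) \<in> measurable (uniform_measure (count_space UNIV) {1..N}) borel"
  by (simp add: measurable_cong_sets[OF sets_uniform_measure refl])

lemma emp_sets: "sets (empirical N xs g) = sets borel"
  by (simp add: empirical_def)

lemma emp_prob: assumes "N \<ge> 1" shows "prob_space (empirical N xs g)"
  unfolding empirical_def
proof (rule prob_space.prob_space_distr[OF _ emp_meas])
  show "prob_space (uniform_measure (count_space UNIV) {1..N})"
    using assms by (intro prob_space_uniform_measure) auto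
qed

lemma emp_AE:
  assumes "\<And>j. 1 \<le> j \<Longrightarrow> j \<le> N \<Longrightarrow> P (xs j, g (xs j))" "{x. P x} \<in> sets borel"
  shows "AE z in empirical N xs g. P z"
  unfolding empirical_def
proof (subst AE_distr_iff[OF emp_meas])
  show "{x \<in> space borel. P x} \<in> sets borel" using assms(2) by simp
  show "AE x in uniform_measure (count_space UNIV) {1..N}. P (xs x, g (xs x))"
    by (rule AE_uniform_measureI) (use assms(1) in auto)
qed

lemma emp_integral:
  fixes f :: "(real^'d) \<times> (real^'n) \<Rightarrow> real" and xs :: "nat \<Rightarrow> real^'d"
  assumes N: "N \<ge> 1" and f[measurable]: "f \<in> borel_measurable borel" and nn: "\<And>z. 0 \<le> f z"
  shows "(\<integral>z. f z \<partial>empirical N xs g) = (\<Sum>j=1..N. f (xs j, g (xs j))) / real N"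
proof -
  have "(\<integral>z. f z \<partial>empirical N xs g) = (\<integral>j. f (xs j, g (xs j)) \<partial>uniform_measure (count_space UNIV) {1..N})"
    unfolding empirical_def by (rule integral_distr[OF emp_meas f])
  also have "\<dots> = enn2real (\<integral>\<^sup>+j. ennreal (f (xs j, g (xs j))) \<partial>uniform_measure (count_space UNIV) {1..N})"
    by (rule integral_eq_nn_integral) (auto simp: nn measurable_cong_sets[OF sets_uniform_measure refl])
  also have "(\<integral>\<^sup>+j. ennreal (f (xs j, g (xs j))) \<partial>uniform_measure (count_space UNIV) {1..N})
      = (\<integral>\<^sup>+j. ennreal (f (xs j, g (xs j))) * indicator {1..N} j \<partial>count_space UNIV) / emeasure (count_space UNIV) {1..N}"
    by (rule nn_integral_uniform_measure) auto
  also have "(\<integral>\<^sup>+j. ennreal (f (xs j, g (xs j))) * indicator {1..N} j \<partial>count_space UNIV)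
      = (\<integral>\<^sup>+j. ennreal (f (xs j, g (xs j))) \<partial>count_space {1..N})"
    by (rule nn_integral_count_space_indicator[symmetric]) simp
  also have "\<dots> = (\<Sum>j=1..N. ennreal (f (xs j, g (xs j))))" by (rule nn_integral_count_space_finite) simp
  also have "\<dots> = ennreal (\<Sum>j=1..N. f (xs j, g (xs j)))" using nn by simp
  also have "emeasure (count_space UNIV) {1..N} = ennreal (real N)" by (simp add: ennreal_of_nat_eq_real_of_nat)
  also have "ennreal (\<Sum>j=1..N. f (xs j, g (xs j))) / ennreal (real N) = ennreal ((\<Sum>j=1..N. f (xs j, g (xs j))) / real N)"
    using N nn by (intro divide_ennreal) (auto intro: sum_nonneg)
  finally show ?thesis using N nn by (simp add: sum_nonneg)
qed

context
  fixes \<Omega> :: "(real^'d) set" and g :: "real^'d \<Rightarrow> real^'n"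
  assumes Om[measurable]: "\<Omega> \<in> sets lborel" and pos: "emeasure lborel \<Omega> \<noteq> 0" and fin: "emeasure lborel \<Omega> < \<infinity>"
    and gc: "continuous_on UNIV g"
begin

lemma Om': "\<Omega> \<in> sets borel" using Om by simp

lemma gr_meas: "(\<lambda>x. (x, g x)) \<in> measurable (uniform_measure lborel \<Omega>) borel"
proof -
  have "(\<lambda>x. (x, g x)) \<in> borel_measurable borel"
    by (intro borel_measurable_continuous_onI continuous_intros gc)
  then show ?thesis by (simp add: measurable_cong_sets[OF sets_uniform_measure refl])
qed

lemma gr_sets: "sets (graph_measure \<Omega> g) = sets borel"
  by (simp add: graph_measure_def)

lemma gr_prob: "prob_space (graph_measure \<Omega> g)"
  unfolding graph_measure_def
  by (rule prob_space.prob_space_distr[OF _ gr_meas]) (use pos fin in \<open>auto intro!: prob_space_uniform_measure\<close>)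

lemma gr_AE:
  assumes "\<And>x. x \<in> \<Omega> \<Longrightarrow> P (x, g x)" "{x. P x} \<in> sets borel"
  shows "AE z in graph_measure \<Omega> g. P z"
  unfolding graph_measure_def
proof (subst AE_distr_iff[OF gr_meas])
  show "{x \<in> space borel. P x} \<in> sets borel" using assms(2) by simp
  show "AE x in uniform_measure lborel \<Omega>. P (x, g x)"
    by (rule AE_uniform_measureI) (use assms(1) Om' in auto)
qed

lemma gr_integral:
  fixes f :: "(real^'d) \<times> (real^'n) \<Rightarrow> real"
  assumes f[measurable]: "f \<in> borel_measurable borel" and nn: "\<And>z. 0 \<le> f z" and le: "\<And>z. f z \<le> B"
  shows "(\<integral>z. f z \<partial>graph_measure \<Omega> g) = (LINT x:\<Omega>|lborel. f (x, g x)) / measure lborel \<Omega>"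
proof -
  have nnI: "0 \<le> (LINT x:\<Omega>|lborel. f (x, g x))"
    unfolding set_lebesgue_integral_def
    by (rule Bochner_Integration.integral_nonneg) (use nn in \<open>auto split: split_indicator\<close>)
  have fg[measurable]: "(\<lambda>x. f (x, g x)) \<in> borel_measurable borel"
    using measurable_compose[OF gr_meas f] by (simp add: measurable_cong_sets[OF sets_uniform_measure refl])
  have "(\<integral>z. f z \<partial>graph_measure \<Omega> g) = (\<integral>x. f (x, g x) \<partial>uniform_measure lborel \<Omega>)"
    unfolding graph_measure_def by (rule integral_distr[OF gr_meas f])
  also have "\<dots> = enn2real (\<integral>\<^sup>+x. ennreal (f (x, g x)) \<partial>uniform_measure lborel \<Omega>)"
    by (rule integral_eq_nn_integral) (auto simp: nn measurable_cong_sets[OF sets_uniform_measure refl])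
  also have "(\<integral>\<^sup>+x. ennreal (f (x, g x)) \<partial>uniform_measure lborel \<Omega>)
      = (\<integral>\<^sup>+x. ennreal (f (x, g x)) * indicator \<Omega> x \<partial>lborel) / emeasure lborel \<Omega>"
    by (rule nn_integral_uniform_measure) (use Om' in auto)
  also have "(\<integral>\<^sup>+x. ennreal (f (x, g x)) * indicator \<Omega> x \<partial>lborel) = ennreal (LINT x:\<Omega>|lborel. f (x, g x))"
  proof -
    have int: "integrable lborel (\<lambda>x. indicator \<Omega> x * f (x, g x))"
    proof (rule integrableI_bounded_set[where A=\<Omega> and B=B])
      show "AE x in lborel. x \<in> \<Omega> \<longrightarrow> norm (indicator \<Omega> x * f (x, g x)) \<le> B" using nn le by (auto simp: abs_of_nonneg)
    qed (use fin Om' in \<open>auto split: split_indicator\<close>)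
    have "(\<integral>\<^sup>+x. ennreal (f (x, g x)) * indicator \<Omega> x \<partial>lborel) = (\<integral>\<^sup>+x. ennreal (indicator \<Omega> x * f (x, g x)) \<partial>lborel)"
      by (intro nn_integral_cong) (auto split: split_indicator)
    also have "\<dots> = ennreal (\<integral>x. indicator \<Omega> x * f (x, g x) \<partial>lborel)"
      by (rule nn_integral_eq_integral[OF int]) (use nn in auto)
    finally show ?thesis by (simp add: set_lebesgue_integral_def)
  qed
  also have "emeasure lborel \<Omega> = ennreal (measure lborel \<Omega>)" using fin by (simp add: emeasure_eq_ennreal_measure)
  also have "ennreal (LINT x:\<Omega>|lborel. f (x, g x)) / ennreal (measure lborel \<Omega>) = ennreal ((LINT x:\<Omega>|lborel. f (x, g x)) / measure lborel \<Omega>)"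
  proof (rule divide_ennreal)
    show "0 \<le> (LINT x:\<Omega>|lborel. f (x, g x))" by (rule nnI)
    show "0 < measure lborel \<Omega>" using pos fin by (simp add: emeasure_eq_ennreal_measure measure_nonneg less_le)
  qed
  finally show ?thesis using nn nnI
    by (simp add: divide_nonneg_nonneg)
qed

end


lemma open_pos_measure:
  fixes S :: "'a::euclidean_space set"
  assumes "open S" "S \<noteq> {}"
  shows "emeasure lborel S \<noteq> 0"
proof -
  obtain x where x: "x \<in> S" using assms(2) by blast
  obtain a b where ab: "box a b \<subseteq> S" "x \<in> box a b" "\<forall>i\<in>Basis. a \<bullet> i < b \<bullet> i"
    using open_contains_box[OF assms(1) x] by blast
  have "0 < emeasure lborel (box a b)"
    using ab(3) unfolding emeasure_lborel_box_eq
    by (force intro!: prod_pos simp: mem_box algebra_simps)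
  also have "\<dots> \<le> emeasure lborel S" using ab(1) assms(1) by (intro emeasure_mono) auto
  finally show ?thesis by simp
qed

lemma ennreal_tendsto_0I:
  assumes "\<And>e. e > 0 \<Longrightarrow> eventually (\<lambda>N. X N \<le> ennreal e) F"
  shows "(X \<longlongrightarrow> (0::ennreal)) F"
proof (rule order_tendstoI)
  fix a :: ennreal assume a: "0 < a"
  show "eventually (\<lambda>N. X N < a) F"
  proof (cases "a = \<top>")
    case True
    have "eventually (\<lambda>N. X N \<le> ennreal 1) F" by (rule assms) simp
    then show ?thesis by eventually_elim (use True in \<open>auto simp: top_unique intro: le_less_trans[OF _ ennreal_less_top[of 1]]\<close>)
  next
    case False
    then obtain r where r: "a = ennreal r" "r > 0" using a by (cases a) auto
    have "eventually (\<lambda>N. X N \<le> ennreal (r/2)) F" using assms r by simp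
    then show ?thesis
    proof eventually_elim
      case (elim N)
      have "ennreal (r/2) < ennreal r" using r by (simp add: ennreal_less_iff)
      then show ?case using elim r by (auto intro: le_less_trans)
    qed
  qed
qed auto

lemma wass_le:
  assumes p: "0 < p" and e: "0 \<le> e" and c: "transport_cost p \<mu> \<nu> \<le> ennreal (e powr p)"
  shows "wasserstein p \<mu> \<nu> \<le> ennreal e"
proof -
  have nt: "transport_cost p \<mu> \<nu> \<noteq> \<top>" using c by (auto simp: top_unique)
  have "enn2real (transport_cost p \<mu> \<nu>) \<le> e powr p"
    using c by (simp add: enn2real_leI)
  then have "enn2real (transport_cost p \<mu> \<nu>) powr (1/p) \<le> (e powr p) powr (1/p)"
    using p by (intro powr_mono2) auto
  also have "\<dots> = e" using p e by (simp add: powr_powr)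
  finally show ?thesis unfolding wasserstein_def using nt by (simp add: ennreal_leI)
qed

lemma pou_le1: "finite C \<Longrightarrow> c \<in> C \<Longrightarrow> pou C r c z \<le> 1"
  using member_le_sum[of c C "\<lambda>c. pou C r c z"] pou_nn pou_sum_le[of C r z] by fastforce


theorem propositionF7:
  fixes \<Omega> :: "(real^'d) set" and xs :: "nat \<Rightarrow> real^'d"
    and \<tau> :: real and s :: nat and \<rho> :: "real^'d \<Rightarrow> real"
    and h :: "(real^'d \<Rightarrow> real) \<Rightarrow> real^'n" and p :: real
  assumes "open \<Omega>" and "bounded \<Omega>" and "\<Omega> \<noteq> {}"
    and "regularly_distributed \<Omega> xs"
    and "\<tau> > 0" and "mollifier \<tau> \<rho>"
    and "H_minus s \<Omega> h"
    and "1 \<le> p"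
  shows "(\<lambda>N. wasserstein p (empirical N xs (R_tau \<Omega> \<tau> \<rho> h))
                              (graph_measure \<Omega> (R_tau \<Omega> \<tau> \<rho> h))) \<longlonglongrightarrow> 0"
proof -
  note Oo = assms(1) and Ob = assms(2) and One = assms(3) and rd = assms(4)
    and t0 = assms(5) and moll = assms(6) and Hm = assms(7) and p1 = assms(8)
  define g where "g = R_tau \<Omega> \<tau> \<rho> h"
  have gc: "continuous_on UNIV g" unfolding g_def by (rule R_cont[OF Oo Ob t0 moll Hm])
  have Om: "\<Omega> \<in> sets lborel" using Oo by simp
  have pos: "emeasure lborel \<Omega> \<noteq> 0" by (rule open_pos_measure[OF Oo One])
  have fin: "emeasure lborel \<Omega> < \<infinity>" by (rule emeasure_bounded_finite[OF Ob])
  have p0: "0 < p" using p1 by simp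
  define K where "K = (\<lambda>x. (x, g x)) ` closure \<Omega>"
  have gc': "continuous_on (closure \<Omega>) (\<lambda>x. (x, g x))"
    by (intro continuous_intros continuous_on_subset[OF gc]) auto
  have Kc: "compact K" unfolding K_def
    by (rule compact_continuous_image[OF gc']) (simp add: Ob)
  obtain Dm where Dm: "\<forall>z\<in>K. norm z \<le> Dm" using compact_imp_bounded[OF Kc] bounded_iff by metis
  define D where "D = 2 * \<bar>Dm\<bar>"
  have D0: "0 \<le> D" unfolding D_def by simp
  have KD: "dist z w \<le> D" if "z \<in> K" "w \<in> K" for z w
  proof -
    have "dist z w \<le> norm z + norm w" by (simp add: dist_norm norm_triangle_ineq4)
    also have "\<dots> \<le> D"
    proof -
      have "norm z \<le> Dm" "norm w \<le> Dm" using Dm that by auto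
      then show ?thesis unfolding D_def by linarith
    qed
    finally show ?thesis .
  qed
  have Ks: "K \<in> sets borel" using compact_imp_closed[OF Kc] by simp
  have xs\<Omega>: "xs j \<in> \<Omega>" if "j \<ge> 1" for j using rd that by (simp add: regularly_distributed_def)
  have rdc: "(\<lambda>N. (\<Sum>j=1..N. \<phi> (xs j)) / real N) \<longlonglongrightarrow> (LINT x:\<Omega>|lborel. \<phi> x) / measure lborel \<Omega>"
    if "continuous_on (closure \<Omega>) \<phi>" for \<phi> using rd that by (simp add: regularly_distributed_def)
  show ?thesis unfolding g_def[symmetric]
  proof (rule ennreal_tendsto_0I)
    fix e :: real assume e: "e > 0"
    define \<delta> where "\<delta> = e / 2"
    define r where "r = \<delta> / 2"
    have \<delta>0: "0 \<le> \<delta>" unfolding \<delta>_def using e by simp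
    have r0: "r > 0" unfolding r_def \<delta>_def using e by simp
    obtain C where C: "finite C" "C \<subseteq> K" "K \<subseteq> (\<Union>c\<in>C. ball c r)" using finite_cover[OF Kc r0] by blast
    define \<theta> where "\<theta> = (\<lambda>c. pou C r c)"
    define a where "a c = (LINT x:\<Omega>|lborel. \<theta> c (x, g x)) / measure lborel \<Omega>" for c
    define sN where "sN c N = (\<Sum>j=1..N. \<theta> c (xs j, g (xs j))) / real N" for c N
    have conv: "(\<lambda>N. sN c N) \<longlonglongrightarrow> a c" for c
    proof -
      have "continuous_on (closure \<Omega>) (\<lambda>x. pou C r c (x, g x))"
        by (rule pou_cont[OF C(1) gc']) (use C(3) in \<open>auto simp: K_def\<close>)
      from rdc[OF this] show ?thesis unfolding sN_def a_def \<theta>_def .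
    qed
    have "(\<lambda>N. \<Sum>c\<in>C. \<bar>a c - sN c N\<bar>) \<longlonglongrightarrow> (\<Sum>c\<in>C. \<bar>a c - a c\<bar>)"
      by (intro tendsto_intros conv)
    then have "(\<lambda>N. \<Sum>c\<in>C. \<bar>a c - sN c N\<bar>) \<longlonglongrightarrow> 0" by simp
    then have "(\<lambda>N. D powr p * (\<Sum>c\<in>C. \<bar>a c - sN c N\<bar>)) \<longlonglongrightarrow> 0" by (rule tendsto_mult_right_zero)
    then have ev1: "eventually (\<lambda>N. D powr p * (\<Sum>c\<in>C. \<bar>a c - sN c N\<bar>) < e powr p / 2) sequentially"
      by (rule order_tendstoD) (use e in simp)
    have ev2: "eventually (\<lambda>N. N \<ge> 1) sequentially" by (rule eventually_ge_at_top)
    have \<delta>p: "\<delta> powr p \<le> e powr p / 2"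
    proof -
      have "\<delta> powr p = e powr p / 2 powr p" unfolding \<delta>_def using e by (simp add: powr_divide)
      also have "2 powr 1 \<le> (2::real) powr p" using p1 by (intro powr_mono) auto
      then have "e powr p / 2 powr p \<le> e powr p / 2" by (intro divide_left_mono) auto
      finally show ?thesis .
    qed
    have \<theta>m: "\<And>k. k \<in> C \<Longrightarrow> \<theta> k \<in> borel_measurable borel" unfolding \<theta>_def by simp
    have \<theta>nn: "\<And>k z. k \<in> C \<Longrightarrow> 0 \<le> \<theta> k z" unfolding \<theta>_def by (simp add: pou_nn)
    have \<theta>le: "\<And>z. (\<Sum>k\<in>C. \<theta> k z) \<le> 1" unfolding \<theta>_def by (rule pou_sum_le[OF C(1)])
    have \<theta>le1: "\<And>k z. k \<in> C \<Longrightarrow> \<theta> k z \<le> 1" unfolding \<theta>_def by (rule pou_le1[OF C(1)])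
    have diam: "\<And>k z w. k \<in> C \<Longrightarrow> 0 < \<theta> k z \<Longrightarrow> 0 < \<theta> k w \<Longrightarrow> dist z w \<le> \<delta>"
    proof -
      fix k z w assume "k \<in> C" "0 < \<theta> k z" "0 < \<theta> k w"
      then have "dist z k < r" "dist w k < r" unfolding \<theta>_def by (auto intro: pou_pos)
      then have "dist z w < 2 * r" using dist_triangle3[of z w k] by (simp add: dist_commute)
      then show "dist z w \<le> \<delta>" unfolding r_def by simp
    qed
    have AE\<nu>: "AE w in graph_measure \<Omega> g. w \<in> K"
      by (rule gr_AE[OF Om pos fin gc]) (use Ks closure_subset in \<open>auto simp: K_def\<close>)
    have sum1: "AE w in graph_measure \<Omega> g. (\<Sum>k\<in>C. \<theta> k w) = 1"
    proof (rule gr_AE[OF Om pos fin gc])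
      fix x assume "x \<in> \<Omega>"
      then have "(x, g x) \<in> (\<Union>c\<in>C. ball c r)" using C(3) closure_subset unfolding K_def by blast
      then show "(\<Sum>k\<in>C. \<theta> k (x, g x)) = 1" unfolding \<theta>_def by (rule pou_sum_eq[OF C(1)])
    next
      have "(\<lambda>w. \<Sum>k\<in>C. \<theta> k w) \<in> borel_measurable borel" using \<theta>m by (intro borel_measurable_sum) auto
      then show "{w. (\<Sum>k\<in>C. \<theta> k w) = 1} \<in> sets borel" by measurable
    qed
    show "eventually (\<lambda>N. wasserstein p (empirical N xs g) (graph_measure \<Omega> g) \<le> ennreal e) sequentially"
      using ev1 ev2
    proof eventually_elim
      case (elim N)
      have AE\<mu>: "AE z in empirical N xs g. z \<in> K"
        by (rule emp_AE) (use Ks closure_subset xs\<Omega> in \<open>auto simp: K_def\<close>)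
      have cb: "transport_cost p (empirical N xs g) (graph_measure \<Omega> g) \<le>
          ennreal (\<delta> powr p + D powr p * (\<Sum>k\<in>C. \<bar>(\<integral>w. \<theta> k w \<partial>graph_measure \<Omega> g) - (\<integral>z. \<theta> k z \<partial>empirical N xs g)\<bar>))"
        by (rule cost_bound'[OF emp_prob[OF elim(2)] emp_sets gr_prob[OF Om pos fin gc] gr_sets[OF Om pos fin gc]
              C(1) \<theta>m \<theta>nn \<theta>le p0 \<delta>0 D0 diam Ks AE\<mu> AE\<nu> KD sum1])
      have i1: "(\<integral>w. \<theta> k w \<partial>graph_measure \<Omega> g) = a k" if "k \<in> C" for k
        unfolding a_def by (rule gr_integral[OF Om pos fin gc, where B=1]) (use \<theta>m \<theta>nn \<theta>le1 that in auto)
      have i2: "(\<integral>z. \<theta> k z \<partial>empirical N xs g) = sN k N" if "k \<in> C" for k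
        unfolding sN_def by (rule emp_integral[OF elim(2)]) (use \<theta>m \<theta>nn that in auto)
      have "(\<Sum>k\<in>C. \<bar>(\<integral>w. \<theta> k w \<partial>graph_measure \<Omega> g) - (\<integral>z. \<theta> k z \<partial>empirical N xs g)\<bar>) = (\<Sum>k\<in>C. \<bar>a k - sN k N\<bar>)"
        using i1 i2 by (intro sum.cong) auto
      with cb have "transport_cost p (empirical N xs g) (graph_measure \<Omega> g) \<le> ennreal (\<delta> powr p + D powr p * (\<Sum>k\<in>C. \<bar>a k - sN k N\<bar>))"
        by simp
      also have "\<dots> \<le> ennreal (e powr p)"
        using \<delta>p elim(1) by (intro ennreal_leI) linarith
      finally have c: "transport_cost p (empirical N xs g) (graph_measure \<Omega> g) \<le> ennreal (e powr p)" .
      have e0: "0 \<le> e" using e by simp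
      show ?case by (rule wass_le[OF p0 e0 c])
    qed
  qed
qed


end
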